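(* Let $T,R,\epsilon,\lambda>0$ and let $U=(\phi,A)$ with $A=A_0dy^0+A_1dy^1+A_2dy^2$ be a smooth configuration on $[0,T]\times\overline{B_\nu(R)}$, $B_\nu(R)\subset\mathbb R^2$. For $s\in[0,T]$ write $U(s)$ for the 2d configuration $(\phi(s,\cdot),A_1(s,\cdot)dy^1+A_2(s,\cdot)dy^2)$. Then for all $r\in(0,R)$ and $t\in(0,T)$, $$\Big|\int_{B_\nu(r)}\omega(U(t))-\int_{B_\nu(r)}\omega(U(0))\Big|\le\max\{1,\lambda^{-1}\}\int_{(0,t)\times\partial B_\nu(r)}e^{3d}_{\epsilon,\lambda}(U)\,d\mathcal H^2,$$ where $e^{3d}_{\epsilon,\lambda}(U)=\frac12\sum_{a=0}^2|D_a\phi|^2+\frac{\epsilon^2}2\sum_{0\le a<b\le2}F_{ab}^2+\frac{\lambda}{8\epsilon^2}(|\phi|^2-1)^2$.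
   Context: Points of $(0,T)\times B_\nu(R)$ are written $(y^0,y^\nu)$, $y^\nu=(y^1,y^2)$, $B_\nu(r)=\{|y^\nu|<r\}$. $D_a\phi=\partial_a\phi-iA_a\phi$, $F_{ab}=\partial_aA_b-\partial_bA_a$, $\langle f,g\rangle=\mathrm{Re}(f\bar g)$. For a 2d configuration $V=(\phi,A_1dy^1+A_2dy^2)$: $j(V)=(\langle i\phi,D_1\phi\rangle,\langle i\phi,D_2\phi\rangle)$, $\omega(V)=\frac12(\partial_1j_2-\partial_2j_1+F_{12})$. $\mathcal H^2$ is two-dimensional Hausdorff measure. *)

theory Defs
  imports "HOL-Analysis.Analysis"
begin

fun Ck_on :: "nat \<Rightarrow> 'a::real_normed_vector set \<Rightarrow> ('a \<Rightarrow> 'b::real_normed_vector) \<Rightarrow> bool" where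
  "Ck_on 0 S f = continuous_on S f"
| "Ck_on (Suc n) S f = (f differentiable_on S \<and>
      (\<forall>v. Ck_on n S (\<lambda>x. frechet_derivative f (at x) v)))"

definition smooth_on :: "'a::real_normed_vector set \<Rightarrow> ('a \<Rightarrow> 'b::real_normed_vector) \<Rightarrow> bool" where
  "smooth_on S f \<longleftrightarrow> (\<forall>k. Ck_on k S f)"

(* points of space-time (y0,y1,y2) *)
type_synonym pt3 = "real \<times> real \<times> real"
type_synonym pt2 = "real \<times> real"

definition evec3 :: "nat \<Rightarrow> pt3" where
  "evec3 a = (if a = 0 then (1,0,0) else if a = 1 then (0,1,0) else (0,0,1))"

definition evec2 :: "nat \<Rightarrow> pt2" where
  "evec2 a = (if a = 1 then (1,0) else (0,1))"

definition pd3 :: "nat \<Rightarrow> (pt3 \<Rightarrow> 'b::real_normed_vector) \<Rightarrow> pt3 \<Rightarrow> 'b" where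
  "pd3 a f p = frechet_derivative f (at p) (evec3 a)"

definition pd2 :: "nat \<Rightarrow> (pt2 \<Rightarrow> 'b::real_normed_vector) \<Rightarrow> pt2 \<Rightarrow> 'b" where
  "pd2 a f p = frechet_derivative f (at p) (evec2 a)"

definition rinner :: "complex \<Rightarrow> complex \<Rightarrow> real" where
  "rinner f g = Re (f * cnj g)"

(* 2d configuration: phi, and A = A 1 dy1 + A 2 dy2 (A indexed by a \<in> {1,2}) *)
type_synonym config2 = "(pt2 \<Rightarrow> complex) \<times> (nat \<Rightarrow> pt2 \<Rightarrow> real)"
(* 3d configuration: phi, and A = A 0 dy0 + A 1 dy1 + A 2 dy2 *)
type_synonym config3 = "(pt3 \<Rightarrow> complex) \<times> (nat \<Rightarrow> pt3 \<Rightarrow> real)"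

definition cov2 :: "config2 \<Rightarrow> nat \<Rightarrow> pt2 \<Rightarrow> complex" where
  "cov2 V a y = pd2 a (fst V) y - \<i> * complex_of_real (snd V a y) * fst V y"

definition cov3 :: "config3 \<Rightarrow> nat \<Rightarrow> pt3 \<Rightarrow> complex" where
  "cov3 U a p = pd3 a (fst U) p - \<i> * complex_of_real (snd U a p) * fst U p"

definition curv2 :: "config2 \<Rightarrow> nat \<Rightarrow> nat \<Rightarrow> pt2 \<Rightarrow> real" where
  "curv2 V a b y = pd2 a (snd V b) y - pd2 b (snd V a) y"

definition curv3 :: "config3 \<Rightarrow> nat \<Rightarrow> nat \<Rightarrow> pt3 \<Rightarrow> real" where
  "curv3 U a b p = pd3 a (snd U b) p - pd3 b (snd U a) p"

definition jcur :: "config2 \<Rightarrow> nat \<Rightarrow> pt2 \<Rightarrow> real" where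
  "jcur V a y = rinner (\<i> * fst V y) (cov2 V a y)"

definition vort :: "config2 \<Rightarrow> pt2 \<Rightarrow> real" where
  "vort V y = (pd2 1 (jcur V 2) y - pd2 2 (jcur V 1) y + curv2 V 1 2 y) / 2"

definition slice :: "config3 \<Rightarrow> real \<Rightarrow> config2" where
  "slice U s = ((\<lambda>y. fst U (s, y)), (\<lambda>a y. snd U a (s, y)))"

definition e3d :: "real \<Rightarrow> real \<Rightarrow> config3 \<Rightarrow> pt3 \<Rightarrow> real" where
  "e3d \<epsilon> lam U p =
     (1/2) * (\<Sum>a\<in>{0,1,2::nat}. (cmod (cov3 U a p))\<^sup>2)
   + (\<epsilon>\<^sup>2/2) * (\<Sum>(a,b)\<in>{(0,1),(0,2),(1,2::nat)}. (curv3 U a b p)\<^sup>2)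
   + (lam / (8 * \<epsilon>\<^sup>2)) * ((cmod (fst U p))\<^sup>2 - 1)\<^sup>2"

(* integral over the lateral cylinder (0,t) x dB(r) w.r.t. H^2, written through the
   isometric parametrisation (s,theta) \<mapsto> (s, r cos theta, r sin theta), area element r ds dtheta *)
definition cyl_integral :: "real \<Rightarrow> real \<Rightarrow> (pt3 \<Rightarrow> real) \<Rightarrow> real" where
  "cyl_integral t r f =
     integral ({0<..<t} \<times> {0<..<2*pi}) (\<lambda>(s,\<theta>). f (s, r * cos \<theta>, r * sin \<theta>) * r)"

end

theory Submission
  imports Defs
begin

definition p2v :: "real \<times> real \<Rightarrow> real^2" where "p2v p = vector [fst p, snd p]"
definition v2p :: "real^2 \<Rightarrow> real \<times> real" where "v2p x = (x$1, x$2)"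

lemma v2p_p2v[simp]: "v2p (p2v p) = p"
  by (simp add: v2p_def p2v_def)
lemma p2v_v2p[simp]: "p2v (v2p x) = x"
  by (simp add: v2p_def p2v_def vec_eq_iff forall_2)

lemma mem_cbox2: "(x::real^2) \<in> cbox a b \<longleftrightarrow> a$1 \<le> x$1 \<and> x$1 \<le> b$1 \<and> a$2 \<le> x$2 \<and> x$2 \<le> b$2"
  by (auto simp: mem_box_cart forall_2)

lemma v2p_cbox: "v2p ` cbox u v = cbox (u$1,u$2) (v$1,v$2)"
proof
  show "v2p ` cbox u v \<subseteq> cbox (u$1,u$2) (v$1,v$2)"
    by (auto simp: v2p_def mem_cbox2 cbox_Pair_eq)
  show "cbox (u$1,u$2) (v$1,v$2) \<subseteq> v2p ` cbox u v"
  proof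
    fix p assume "p \<in> cbox (u$1,u$2) (v$1,v$2)"
    then have "p2v p \<in> cbox u v" by (cases p) (auto simp: p2v_def mem_cbox2 cbox_Pair_eq)
    then show "p \<in> v2p ` cbox u v" by (metis image_eqI v2p_p2v)
  qed
qed

lemma p2v_cbox: "p2v ` cbox u v = cbox (p2v u) (p2v v)"
proof
  show "p2v ` cbox u v \<subseteq> cbox (p2v u) (p2v v)"
    by (cases u, cases v) (auto simp: p2v_def mem_cbox2 cbox_Pair_eq)
  show "cbox (p2v u) (p2v v) \<subseteq> p2v ` cbox u v"
  proof
    fix x assume "x \<in> cbox (p2v u) (p2v v)"
    then have "v2p x \<in> cbox u v" by (cases u, cases v) (auto simp: p2v_def v2p_def mem_cbox2 cbox_Pair_eq)
    then show "x \<in> p2v ` cbox u v" by (metis image_eqI p2v_v2p)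
  qed
qed

lemma content_cbox2: "measure lborel (cbox (a::real^2) b) = measure lborel (cbox (a$1,a$2) (b$1,b$2))"
proof (cases "cbox a b = {}")
  case True
  then have "cbox (a$1,a$2) (b$1,b$2) = {}"
    by (auto simp: cbox_Pair_eq mem_cbox2)
  then show ?thesis using True by simp
next
  case False
  then have "a$1 \<le> b$1" "a$2 \<le> b$2" by (auto simp: mem_cbox2)
  then show ?thesis using False by (simp add: content_cbox_cart content_Pair UNIV_2)
qed

lemma linear_p2v: "bounded_linear p2v"
  by (rule bounded_linear_intro[where K=1]) (auto simp: p2v_def vec_eq_iff forall_2 norm_vec_def L2_set_def UNIV_2 norm_Pair)

lemma linear_v2p: "bounded_linear v2p"
  by (rule bounded_linear_intro[where K=1]) (auto simp: v2p_def norm_vec_def L2_set_def UNIV_2 norm_Pair)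

lemma has_integral_v2p_cbox:
  fixes f :: "real \<times> real \<Rightarrow> 'b::real_normed_vector"
  assumes "(f has_integral i) (cbox a b)"
  shows "((\<lambda>x. f (v2p x)) has_integral i) (p2v ` cbox a b)"
proof -
  have "((\<lambda>x. f (v2p x)) has_integral (1/1) *\<^sub>R i) (p2v ` cbox a b)"
  proof (rule has_integral_twiddle[where g=v2p and h=p2v])
    show "\<And>x. continuous (at x) v2p" using linear_v2p
      by (simp add: bounded_linear.linear linear_continuous_at)
    show "\<exists>w z. v2p ` cbox u v = cbox w z" for u v using v2p_cbox by blast
    show "\<exists>w z. p2v ` cbox u v = cbox w z" for u v using p2v_cbox by blast
    show "measure lborel (v2p ` cbox u v) = 1 * measure lborel (cbox u v)" for u v
      by (simp add: v2p_cbox content_cbox2)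
  qed (use assms in auto)
  then show ?thesis by simp
qed

lemma has_integral_p2v_cbox:
  fixes f :: "real^2 \<Rightarrow> 'b::real_normed_vector"
  assumes "(f has_integral i) (cbox a b)"
  shows "((\<lambda>x. f (p2v x)) has_integral i) (v2p ` cbox a b)"
proof -
  have "((\<lambda>x. f (p2v x)) has_integral (1/1) *\<^sub>R i) (v2p ` cbox a b)"
  proof (rule has_integral_twiddle[where g=p2v and h=v2p])
    show "\<And>x. continuous (at x) p2v" using linear_p2v
      by (simp add: bounded_linear.linear linear_continuous_at)
    show "\<exists>w z. v2p ` cbox u v = cbox w z" for u v using v2p_cbox by blast
    show "\<exists>w z. p2v ` cbox u v = cbox w z" for u v using p2v_cbox by blast
    show "measure lborel (p2v ` cbox u v) = 1 * measure lborel (cbox u v)" for u v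
      by (simp add: p2v_cbox content_cbox2) (simp add: p2v_def)
  qed (use assms in auto)
  then show ?thesis by simp
qed

lemma has_integral_v2p:
  fixes f :: "real \<times> real \<Rightarrow> 'b::banach"
  assumes "bounded S" "(f has_integral i) S"
  shows "((\<lambda>x. f (v2p x)) has_integral i) (p2v ` S)"
proof -
  obtain a where a: "S \<subseteq> cbox (-a) a" using assms(1) bounded_subset_cbox_symmetric by blast
  have "((\<lambda>x. if x \<in> S then f x else 0) has_integral i) (cbox (-a) a)"
    using a assms(2) by simp
  from has_integral_v2p_cbox[OF this]
  have "((\<lambda>x. if x \<in> p2v ` S then f (v2p x) else 0) has_integral i) (p2v ` cbox (-a) a)"
    by (smt (verit, best) has_integral_cong image_iff p2v_v2p v2p_p2v)
  moreover have "p2v ` S \<subseteq> p2v ` cbox (-a) a" using a by blast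
  ultimately show ?thesis by simp
qed

lemma has_integral_p2v:
  fixes f :: "real^2 \<Rightarrow> 'b::banach"
  assumes "bounded S" "(f has_integral i) S"
  shows "((\<lambda>x. f (p2v x)) has_integral i) (v2p ` S)"
proof -
  obtain a where a: "S \<subseteq> cbox (-a) a" using assms(1) bounded_subset_cbox_symmetric by blast
  have "((\<lambda>x. if x \<in> S then f x else 0) has_integral i) (cbox (-a) a)"
    using a assms(2) by simp
  from has_integral_p2v_cbox[OF this]
  have "((\<lambda>x. if x \<in> v2p ` S then f (p2v x) else 0) has_integral i) (v2p ` cbox (-a) a)"
    by (smt (verit, best) has_integral_cong image_iff p2v_v2p v2p_p2v)
  moreover have "v2p ` S \<subseteq> v2p ` cbox (-a) a" using a by blast
  ultimately show ?thesis by simp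
qed

lemma image_v2p_p2v[simp]: "v2p ` p2v ` S = S"
  by (simp add: image_comp o_def)
lemma image_p2v_v2p[simp]: "p2v ` v2p ` S = S"
  by (simp add: image_comp o_def)

lemma integral_v2p:
  fixes f :: "real \<times> real \<Rightarrow> 'b::banach"
  assumes "bounded S"
  shows "integral (p2v ` S) (\<lambda>x. f (v2p x)) = integral S f"
proof (cases "f integrable_on S")
  case True
  then have "(f has_integral integral S f) S" by (simp add: integrable_integral)
  from has_integral_v2p[OF assms this] show ?thesis by (simp add: integral_unique)
next
  case False
  have "\<not> (\<lambda>x. f (v2p x)) integrable_on (p2v ` S)"
  proof
    assume "(\<lambda>x. f (v2p x)) integrable_on (p2v ` S)"
    then obtain j where "((\<lambda>x. f (v2p x)) has_integral j) (p2v ` S)" by blast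
    from has_integral_p2v[OF bounded_linear_image[OF assms linear_p2v] this]
    have "f integrable_on S" by auto
    with False show False by simp
  qed
  then show ?thesis using False by (simp add: not_integrable_integral)
qed

lemma integral_p2v:
  fixes f :: "real^2 \<Rightarrow> 'b::banach"
  assumes "bounded S"
  shows "integral (v2p ` S) (\<lambda>x. f (p2v x)) = integral S f"
  using integral_v2p[of "v2p ` S" "\<lambda>x. f (p2v x)"] bounded_linear_image[OF assms linear_v2p]
  by simp


definition Pol :: "real \<times> real \<Rightarrow> real \<times> real" where
  "Pol p = (fst p * cos (snd p), fst p * sin (snd p))"
definition Pol' :: "real \<times> real \<Rightarrow> real \<times> real \<Rightarrow> real \<times> real" where
  "Pol' p v = (fst v * cos (snd p) - fst p * snd v * sin (snd p), fst v * sin (snd p) + fst p * snd v * cos (snd p))"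

lemma has_derivative_Pol: "(Pol has_derivative Pol' p) (at p within X)"
  unfolding Pol_def Pol'_def
  by (rule derivative_eq_intros refl | simp)+ (auto simp: algebra_simps fun_eq_iff)

lemma box_Pair_eq: "box (a,c) (b,d) = box a b \<times> box (c::'b::euclidean_space) (d::'b)"
  by (auto simp: mem_box Basis_prod_def inner_Pair ball_Un)

lemma p2v_box: "p2v ` box u v = box (p2v u) (p2v v)"
proof
  show "p2v ` box u v \<subseteq> box (p2v u) (p2v v)"
    by (cases u, cases v) (auto simp: p2v_def mem_box_cart forall_2 box_Pair_eq)
  show "box (p2v u) (p2v v) \<subseteq> p2v ` box u v"
  proof
    fix x assume "x \<in> box (p2v u) (p2v v)"
    then have "v2p x \<in> box u v" by (cases u, cases v) (auto simp: p2v_def v2p_def mem_box_cart forall_2 box_Pair_eq)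
    then show "x \<in> p2v ` box u v" by (metis image_eqI p2v_v2p)
  qed
qed

lemma norm_Pol: "norm (Pol p) = \<bar>fst p\<bar>"
proof -
  have "norm (Pol p) = sqrt ((fst p * cos (snd p))\<^sup>2 + (fst p * sin (snd p))\<^sup>2)"
    unfolding Pol_def norm_Pair by simp
  moreover have "(fst p * cos (snd p))\<^sup>2 + (fst p * sin (snd p))\<^sup>2 = (fst p)\<^sup>2"
    by (simp add: power_mult_distrib flip: distrib_left)
  ultimately show ?thesis by simp
qed

lemma Pol_complex: "Complex (fst (Pol p)) (snd (Pol p)) = complex_of_real (fst p) * exp (\<i> * complex_of_real (snd p))"
  by (simp add: Pol_def complex_eq_iff Re_exp Im_exp)

lemma inj_Pol: "inj_on Pol ({0<..} \<times> {0..<2*pi})"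
proof (rule inj_onI)
  fix p q assume p: "p \<in> {0<..} \<times> {0..<2*pi}" and q: "q \<in> {0<..} \<times> {0..<2*pi}" and e: "Pol p = Pol q"
  let ?z = "Complex (fst (Pol p)) (snd (Pol p))"
  have "Arg2pi ?z = snd p" using p by (intro Arg2pi_unique[OF Pol_complex[symmetric]]) auto
  moreover have "Arg2pi ?z = snd q" unfolding e using q by (intro Arg2pi_unique[OF Pol_complex[symmetric]]) auto
  moreover have "fst p = fst q" using e norm_Pol[of p] norm_Pol[of q] p q by auto
  ultimately show "p = q" by (simp add: prod_eq_iff)
qed

lemma ball_minus_Pol: "ball 0 r - Pol ` box (0,0) (r, 2*pi) \<subseteq> {x. x \<bullet> (0,1) = 0}"
proof
  fix x :: "real \<times> real" assume x: "x \<in> ball 0 r - Pol ` box (0,0) (r, 2*pi)"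
  show "x \<in> {x. x \<bullet> (0,1) = 0}"
  proof (rule ccontr)
    assume ne: "x \<notin> {x. x \<bullet> (0,1) = 0}"
    then have sx: "snd x \<noteq> 0" by (cases x) (auto simp: inner_Pair)
    let ?z = "Complex (fst x) (snd x)"
    have z0: "?z \<notin> \<real>" using sx by (simp add: complex_is_Real_iff)
    then have nz: "?z \<noteq> 0" by auto
    have a0: "Arg2pi ?z \<noteq> 0" using z0 Arg2pi_eq_0 by blast
    have A: "0 \<le> Arg2pi ?z" "Arg2pi ?z < 2*pi" "?z = complex_of_real (cmod ?z) * exp (\<i> * complex_of_real (Arg2pi ?z))"
      using Arg2pi[of ?z] by (auto simp: is_Arg_def)
    have nr: "cmod ?z < r" using x by (cases x) (simp add: dist_norm norm_Pair cmod_def)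
    have "Pol (cmod ?z, Arg2pi ?z) = x"
      using arg_cong[OF A(3), of Re] arg_cong[OF A(3), of Im]
      by (simp add: Pol_def Re_exp Im_exp prod_eq_iff)
    moreover have "(cmod ?z, Arg2pi ?z) \<in> box (0,0) (r, 2*pi)"
      using A a0 nz nr by (auto simp: box_Pair_eq)
    ultimately show False using x by (metis DiffD2 image_eqI)
  qed
qed

lemma polar_integral:
  fixes f :: "real \<times> real \<Rightarrow> real"
  assumes f: "continuous_on (cball 0 r) f" and r: "0 < r"
  shows "integral (ball 0 r) f = integral (cbox (0,0) (r,2*pi)) (\<lambda>p. fst p * f (Pol p))"
proof -
  define R where "R = box (0::real,0::real) (r,2*pi)"
  define S where "S = p2v ` R"
  define pol where "pol = (\<lambda>x. p2v (Pol (v2p x)))"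
  define pol' where "pol' = (\<lambda>x v. p2v (Pol' (v2p x) (v2p v)))"
  define F where "F = (\<lambda>x::real^2. (vec (f (v2p x)) :: real^1))"
  have S_eq: "S = box (p2v (0,0)) (p2v (r,2*pi))" by (simp add: S_def R_def p2v_box)
  have Sleb: "S \<in> sets lebesgue" unfolding S_eq
    by (simp add: fmeasurableD lmeasurable_open)
  have der: "(pol has_derivative pol' x) (at x within S)" for x
  proof -
    have "((\<lambda>x. Pol (v2p x)) has_derivative (\<lambda>v. Pol' (v2p x) (v2p v))) (at x within S)"
    proof -
      have "(v2p has_derivative v2p) (at x within S)" by (rule bounded_linear_imp_has_derivative[OF linear_v2p])
      from has_derivative_compose[OF this has_derivative_Pol] show ?thesis .
    qed
    have "(p2v has_derivative p2v) (at (Pol (v2p x)))" by (rule bounded_linear_imp_has_derivative[OF linear_p2v])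
    from has_derivative_compose[OF \<open>((\<lambda>x. Pol (v2p x)) has_derivative _) _\<close> this]
    show ?thesis by (simp add: pol_def pol'_def)
  qed
  have RS: "v2p x \<in> R" if "x \<in> S" for x using that by (auto simp: S_def)
  have inj: "inj_on pol S"
  proof (rule inj_onI)
    fix x y assume x: "x \<in> S" and y: "y \<in> S" and e: "pol x = pol y"
    have "Pol (v2p x) = Pol (v2p y)" using e unfolding pol_def by (metis v2p_p2v)
    moreover have "R \<subseteq> {0<..} \<times> {0..<2*pi}" by (auto simp: R_def box_Pair_eq)
    ultimately have "v2p x = v2p y" using inj_Pol RS[OF x] RS[OF y] by (meson inj_on_def subsetD)
    then show "x = y" by (metis p2v_v2p)
  qed
  have det: "\<bar>det (matrix (pol' x))\<bar> = x$1" if "x \<in> S" for x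
  proof -
    have "x$1 > 0" using that by (auto simp: S_eq mem_box_cart p2v_def forall_2)
    moreover have "det (matrix (pol' x)) = x$1"
      by (simp add: det_2 matrix_def pol'_def Pol'_def p2v_def v2p_def axis_def algebra_simps)
         (simp add: power2_eq_square[symmetric] flip: distrib_left)
    ultimately show ?thesis by simp
  qed
  define G where "G = (\<lambda>x. \<bar>det (matrix (pol' x))\<bar> *\<^sub>R F (pol x))"
  define H where "H = (\<lambda>x::real^2. (x$1) *\<^sub>R F (pol x))"
  have Pol_cball: "Pol (v2p x) \<in> cball 0 r" if "x \<in> cbox (p2v (0,0)) (p2v (r,2*pi))" for x
    using that by (auto simp: norm_Pol mem_cbox2 p2v_def v2p_def)
  have contH: "continuous_on (cbox (p2v (0,0)) (p2v (r,2*pi))) H"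
  proof -
    have c1: "continuous_on UNIV (\<lambda>x. Pol (v2p x))"
      unfolding Pol_def v2p_def by (intro continuous_intros)
    have "continuous_on (cbox (p2v (0,0)) (p2v (r,2*pi))) (\<lambda>x. f (Pol (v2p x)))"
      by (rule continuous_on_compose2[OF f continuous_on_subset[OF c1]]) (use Pol_cball in auto)
    moreover have cv: "continuous_on UNIV (vec :: real \<Rightarrow> real^1)"
    proof -
      have "bounded_linear (vec :: real \<Rightarrow> real^1)"
        by (rule bounded_linear_intro[where K=1]) (auto simp: vec_eq_iff norm_vec_def L2_set_def)
      then show ?thesis by (rule linear_continuous_on)
    qed
    ultimately have "continuous_on (cbox (p2v (0,0)) (p2v (r,2*pi))) (\<lambda>x. (vec (f (Pol (v2p x))) :: real^1))"
      using continuous_on_compose2[OF cv] by blast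
    then show ?thesis unfolding H_def F_def pol_def
      by (intro continuous_intros) auto
  qed
  have Habs: "H absolutely_integrable_on S"
    unfolding S_eq absolutely_integrable_on_open_interval
    by (rule absolutely_integrable_continuous[OF contH])
  have Gabs: "G absolutely_integrable_on S"
    by (rule absolutely_integrable_spike[OF Habs negligible_empty]) (simp add: G_def H_def det)
  have cov: "F absolutely_integrable_on (pol ` S) \<and> integral (pol ` S) F = integral S G"
    using has_absolute_integral_change_of_variables[OF Sleb der inj, of F "integral S G"] Gabs
    unfolding G_def by blast
  have polS: "pol ` S = p2v ` Pol ` R" by (simp add: pol_def S_def image_comp o_def)
  have PolR: "Pol ` R \<subseteq> ball 0 r" by (auto simp: R_def box_Pair_eq norm_Pol)
  have "integral (pol ` S) (\<lambda>x. F x $ 1) = integral (pol ` S) F $ 1"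
    using cov by (simp add: absolutely_integrable_on_def)
  also have "\<dots> = integral S G $ 1" using cov by simp
  also have "\<dots> = integral S (\<lambda>x. G x $ 1)"
    using Gabs by (simp add: absolutely_integrable_on_def)
  also have "\<dots> = integral S (\<lambda>x. (\<lambda>p. fst p * f (Pol p)) (v2p x))"
    by (rule integral_cong) (simp add: G_def det F_def pol_def, simp add: v2p_def)
  also have "\<dots> = integral R (\<lambda>p. fst p * f (Pol p))"
    unfolding S_def by (rule integral_v2p) (simp add: R_def)
  also have "\<dots> = integral (cbox (0,0) (r,2*pi)) (\<lambda>p. fst p * f (Pol p))"
    unfolding R_def by (rule integral_open_interval)
  finally have eq1: "integral (pol ` S) (\<lambda>x. F x $ 1) = integral (cbox (0,0) (r,2*pi)) (\<lambda>p. fst p * f (Pol p))" .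
  have "integral (pol ` S) (\<lambda>x. F x $ 1) = integral (Pol ` R) f"
    unfolding polS F_def by simp (rule integral_v2p, use PolR bounded_ball bounded_subset in blast)
  also have "\<dots> = integral (ball 0 r) f"
  proof (rule integral_spike_set)
    have "{x \<in> Pol ` R - ball 0 r. f x \<noteq> 0} = {}" using PolR by blast
    then show "negligible {x \<in> Pol ` R - ball 0 r. f x \<noteq> 0}" by (metis negligible_empty)
    have "(0::real,1::real) \<in> (Basis :: (real \<times> real) set)" by (simp add: Basis_prod_def)
    then have "negligible {x :: real \<times> real. x \<bullet> (0,1) = 0}" by (rule negligible_standard_hyperplane)
    then show "negligible {x \<in> ball 0 r - Pol ` R. f x \<noteq> 0}"
      by (rule negligible_subset) (use ball_minus_Pol[of r] in \<open>auto simp: R_def\<close>)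
  qed
  finally show ?thesis using eq1 by simp
qed


lemma chain2:
  fixes P :: "real \<times> real \<Rightarrow> real"
  assumes "(P has_derivative (\<lambda>v. fst v * p1 + snd v * p2)) (at (g1 t, g2 t))"
    and "(g1 has_real_derivative d1) (at t within X)" "(g2 has_real_derivative d2) (at t within X)"
  shows "((\<lambda>t. P (g1 t, g2 t)) has_real_derivative (d1 * p1 + d2 * p2)) (at t within X)"
proof -
  have G: "((\<lambda>t. (g1 t, g2 t)) has_derivative (\<lambda>h. (d1 * h, d2 * h))) (at t within X)"
    using assms(2,3) by (intro has_derivative_Pair) (auto simp: has_field_derivative_def)
  show ?thesis unfolding has_field_derivative_def
    by (rule has_derivative_eq_rhs[OF has_derivative_compose[OF G assms(1)]]) (simp add: fun_eq_iff algebra_simps)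
qed

lemma cont_Pol:
  assumes "continuous_on U g" "cball 0 r \<subseteq> U"
  shows "continuous_on (cbox (0,0) (r,b)) (\<lambda>p. g (Pol p))"
proof -
  have c1: "continuous_on UNIV Pol" unfolding Pol_def by (intro continuous_intros)
  show ?thesis
    by (rule continuous_on_compose2[OF assms(1) continuous_on_subset[OF c1]])
       (use assms(2) in \<open>auto simp: norm_Pol cbox_Pair_eq\<close>)
qed

lemma Pol_in: "p \<in> cbox (0,0) (r,b) \<Longrightarrow> Pol p \<in> cball 0 r"
  by (auto simp: norm_Pol cbox_Pair_eq)

lemma green_disk:
  fixes P1 P2 a1 a2 b1 b2 :: "real \<times> real \<Rightarrow> real"
  assumes U: "open U" "cball 0 r \<subseteq> U" and r: "0 < r"
    and dP1: "\<And>y. y \<in> U \<Longrightarrow> (P1 has_derivative (\<lambda>v. fst v * a1 y + snd v * a2 y)) (at y)"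
    and dP2: "\<And>y. y \<in> U \<Longrightarrow> (P2 has_derivative (\<lambda>v. fst v * b1 y + snd v * b2 y)) (at y)"
    and c: "continuous_on U a1" "continuous_on U a2" "continuous_on U b1" "continuous_on U b2"
  shows "integral (ball 0 r) (\<lambda>y. b1 y - a2 y) =
         integral {0..2*pi} (\<lambda>\<theta>. (- sin \<theta> * P1 (r * cos \<theta>, r * sin \<theta>) + cos \<theta> * P2 (r * cos \<theta>, r * sin \<theta>)) * r)"
proof -
  have cP1: "continuous_on U P1"
    by (rule continuous_at_imp_continuous_on) (metis dP1 has_derivative_continuous)
  have cP2: "continuous_on U P2"
    by (rule continuous_at_imp_continuous_on) (metis dP2 has_derivative_continuous)
  define B where "B = cbox (0::real,0::real) (r,2*pi)"
  define X where "X = (\<lambda>\<rho> \<theta>. \<rho> * (- sin \<theta> * P1 (Pol (\<rho>,\<theta>)) + cos \<theta> * P2 (Pol (\<rho>,\<theta>))))"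
  define Y where "Y = (\<lambda>\<rho> \<theta>. cos \<theta> * P1 (Pol (\<rho>,\<theta>)) + sin \<theta> * P2 (Pol (\<rho>,\<theta>)))"
  define Xr where "Xr = (\<lambda>p. (- sin (snd p) * P1 (Pol p) + cos (snd p) * P2 (Pol p))
     + fst p * (- sin (snd p) * (cos (snd p) * a1 (Pol p) + sin (snd p) * a2 (Pol p))
                + cos (snd p) * (cos (snd p) * b1 (Pol p) + sin (snd p) * b2 (Pol p))))"
  define Yt where "Yt = (\<lambda>p. (- sin (snd p) * P1 (Pol p) + cos (snd p) * P2 (Pol p))
     + cos (snd p) * (- fst p * sin (snd p) * a1 (Pol p) + fst p * cos (snd p) * a2 (Pol p))
     + sin (snd p) * (- fst p * sin (snd p) * b1 (Pol p) + fst p * cos (snd p) * b2 (Pol p)))"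
  have cXr: "continuous_on B Xr" unfolding Xr_def B_def
    by (intro continuous_intros cont_Pol[OF cP1 U(2)] cont_Pol[OF cP2 U(2)] cont_Pol[OF c(1) U(2)]
        cont_Pol[OF c(2) U(2)] cont_Pol[OF c(3) U(2)] cont_Pol[OF c(4) U(2)])
  have cYt: "continuous_on B Yt" unfolding Yt_def B_def
    by (intro continuous_intros cont_Pol[OF cP1 U(2)] cont_Pol[OF cP2 U(2)] cont_Pol[OF c(1) U(2)]
        cont_Pol[OF c(2) U(2)] cont_Pol[OF c(3) U(2)] cont_Pol[OF c(4) U(2)])
  have ident: "fst p * (b1 (Pol p) - a2 (Pol p)) = Xr p - Yt p" for p
  proof -
    have "sin (snd p) * sin (snd p) + cos (snd p) * cos (snd p) = 1"
      by (simp flip: power2_eq_square)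
    then have "fst p * (b1 (Pol p) - a2 (Pol p)) = fst p * (b1 (Pol p) - a2 (Pol p)) * (sin (snd p) * sin (snd p) + cos (snd p) * cos (snd p))"
      by simp
    also have "\<dots> = Xr p - Yt p" unfolding Xr_def Yt_def by algebra
    finally show ?thesis .
  qed
  have "integral (ball 0 r) (\<lambda>y. b1 y - a2 y) = integral B (\<lambda>p. fst p * (b1 (Pol p) - a2 (Pol p)))"
    unfolding B_def
    by (rule polar_integral[OF _ r]) (intro continuous_intros continuous_on_subset[OF c(3) U(2)] continuous_on_subset[OF c(2) U(2)])
  also have "\<dots> = integral B Xr - integral B Yt"
    unfolding ident by (rule integral_diff) (use integrable_continuous cXr cYt in \<open>auto simp: B_def\<close>)
  also have "integral B Yt = 0"
  proof -
    have "integral B Yt = integral {0..r} (\<lambda>\<rho>. integral {0..2*pi} (\<lambda>\<theta>. Yt (\<rho>,\<theta>)))"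
      unfolding B_def using integral_prod_continuous[OF cYt[unfolded B_def]] by simp
    also have "\<dots> = integral {0..r} (\<lambda>\<rho>. 0)"
    proof (rule integral_cong)
      fix \<rho> assume \<rho>: "\<rho> \<in> {0..r}"
      have "(((\<lambda>\<theta>. Yt (\<rho>,\<theta>))) has_integral (Y \<rho> (2*pi) - Y \<rho> 0)) {0..2*pi}"
      proof (rule fundamental_theorem_of_calculus)
        fix \<theta> assume \<theta>: "\<theta> \<in> {0..2*pi}"
        have inU: "Pol (\<rho>,\<theta>) \<in> U" using Pol_in[of "(\<rho>,\<theta>)" r "2*pi"] \<rho> \<theta> U(2) by (auto simp: cbox_Pair_eq)
        have d1: "((\<lambda>t. P1 (\<rho> * cos t, \<rho> * sin t)) has_real_derivative
                   ((- \<rho> * sin \<theta>) * a1 (Pol (\<rho>,\<theta>)) + (\<rho> * cos \<theta>) * a2 (Pol (\<rho>,\<theta>)))) (at \<theta> within {0..2*pi})"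
          by (rule chain2) (use dP1[OF inU] in \<open>auto simp: Pol_def intro!: derivative_eq_intros\<close>)
        have d2: "((\<lambda>t. P2 (\<rho> * cos t, \<rho> * sin t)) has_real_derivative
                   ((- \<rho> * sin \<theta>) * b1 (Pol (\<rho>,\<theta>)) + (\<rho> * cos \<theta>) * b2 (Pol (\<rho>,\<theta>)))) (at \<theta> within {0..2*pi})"
          by (rule chain2) (use dP2[OF inU] in \<open>auto simp: Pol_def intro!: derivative_eq_intros\<close>)
        show "(Y \<rho> has_vector_derivative Yt (\<rho>,\<theta>)) (at \<theta> within {0..2*pi})"
          unfolding has_real_derivative_iff_has_vector_derivative[symmetric] Y_def Yt_def
          unfolding Pol_def fst_conv snd_conv
          by (rule derivative_eq_intros d1[unfolded Pol_def] d2[unfolded Pol_def] refl)+ (simp add: algebra_simps)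
      qed simp
      moreover have "Y \<rho> (2*pi) = Y \<rho> 0" by (simp add: Y_def Pol_def)
      ultimately show "integral {0..2*pi} (\<lambda>\<theta>. Yt (\<rho>,\<theta>)) = 0" by (simp add: integral_unique)
    qed
    finally show ?thesis by simp
  qed
  also have "integral B Xr = integral {0..2*pi} (\<lambda>\<theta>. integral {0..r} (\<lambda>\<rho>. Xr (\<rho>,\<theta>)))"
  proof -
    have "integral B Xr = integral (cbox (0,0) (2*pi,r)) (\<lambda>(x,y). Xr (y,x))"
      unfolding B_def using integral_swap_2dim[of 0 0 r "2*pi" "\<lambda>x y. Xr (x,y)"] cXr[unfolded B_def] by simp
    also have "\<dots> = integral {0..2*pi} (\<lambda>\<theta>. integral {0..r} (\<lambda>\<rho>. Xr (\<rho>,\<theta>)))"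
    proof -
      have "continuous_on (cbox (0,0) (2*pi,r)) (\<lambda>(x,y). Xr (y,x))"
      proof -
        have c1: "continuous_on (cbox (0,0) (2*pi,r)) (\<lambda>x::real\<times>real. (snd x, fst x))"
          by (intro continuous_intros)
        have s1: "(\<lambda>x::real\<times>real. (snd x, fst x)) ` cbox (0,0) (2*pi,r) \<subseteq> cbox (0,0) (r,2*pi)"
          by (auto simp: cbox_Pair_eq)
        show ?thesis using continuous_on_compose2[OF cXr[unfolded B_def] c1 s1]
          by (simp add: case_prod_unfold)
      qed
      from integral_prod_continuous[OF this] show ?thesis by simp
    qed
    finally show ?thesis .
  qed
  also have "\<dots> = integral {0..2*pi} (\<lambda>\<theta>. X r \<theta>)"
  proof (rule integral_cong)
    fix \<theta> assume \<theta>: "\<theta> \<in> {0..2*pi}"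
    have "(((\<lambda>\<rho>. Xr (\<rho>,\<theta>))) has_integral (X r \<theta> - X 0 \<theta>)) {0..r}"
    proof (rule fundamental_theorem_of_calculus)
      fix \<rho> assume \<rho>: "\<rho> \<in> {0..r}"
      have inU: "Pol (\<rho>,\<theta>) \<in> U" using Pol_in[of "(\<rho>,\<theta>)" r "2*pi"] \<rho> \<theta> U(2) by (auto simp: cbox_Pair_eq)
      have d1: "((\<lambda>t. P1 (t * cos \<theta>, t * sin \<theta>)) has_real_derivative
                 (cos \<theta> * a1 (Pol (\<rho>,\<theta>)) + sin \<theta> * a2 (Pol (\<rho>,\<theta>)))) (at \<rho> within {0..r})"
        by (rule chain2) (use dP1[OF inU] in \<open>auto simp: Pol_def intro!: derivative_eq_intros\<close>)
      have d2: "((\<lambda>t. P2 (t * cos \<theta>, t * sin \<theta>)) has_real_derivative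
                 (cos \<theta> * b1 (Pol (\<rho>,\<theta>)) + sin \<theta> * b2 (Pol (\<rho>,\<theta>)))) (at \<rho> within {0..r})"
        by (rule chain2) (use dP2[OF inU] in \<open>auto simp: Pol_def intro!: derivative_eq_intros\<close>)
      show "((\<lambda>\<rho>. X \<rho> \<theta>) has_vector_derivative Xr (\<rho>,\<theta>)) (at \<rho> within {0..r})"
        unfolding has_real_derivative_iff_has_vector_derivative[symmetric] X_def Xr_def
        unfolding Pol_def fst_conv snd_conv
        by (rule derivative_eq_intros d1[unfolded Pol_def] d2[unfolded Pol_def] refl)+ (simp add: algebra_simps)
    qed (use r in simp)
    then show "integral {0..r} (\<lambda>\<rho>. Xr (\<rho>,\<theta>)) = X r \<theta>" by (simp add: integral_unique X_def)
  qed
  finally show ?thesis by (simp add: X_def Pol_def mult.commute)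
qed


lemma rect_zero:
  fixes f fx fy fxy fyx :: "real \<times> real \<Rightarrow> complex"
  assumes U: "open U"
    and df: "\<And>z. z \<in> U \<Longrightarrow> (f has_derivative (\<lambda>v. fst v *\<^sub>R fx z + snd v *\<^sub>R fy z)) (at z)"
    and dfx: "\<And>z. z \<in> U \<Longrightarrow> ((\<lambda>t. fx (fst z, t)) has_vector_derivative fxy z) (at (snd z))"
    and dfy: "\<And>z. z \<in> U \<Longrightarrow> ((\<lambda>t. fy (t, snd z)) has_vector_derivative fyx z) (at (fst z))"
    and cxy: "continuous_on U fxy" and cyx: "continuous_on U fyx"
    and Q: "cbox (a,c) (b,d) \<subseteq> U" "a \<le> b" "c \<le> d"
  shows "integral (cbox (a,c) (b,d)) fxy = integral (cbox (a,c) (b,d)) fyx"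
proof -
  have inU: "(x,y) \<in> U" if "x \<in> {a..b}" "y \<in> {c..d}" for x y using that Q by (auto simp: cbox_Pair_eq)
  have hx: "((\<lambda>x. fx (x,y)) has_integral (f (b,y) - f (a,y))) {a..b}" if y: "y \<in> {c..d}" for y
  proof (rule fundamental_theorem_of_calculus[OF Q(2)])
    fix x assume x: "x \<in> {a..b}"
    have "((\<lambda>x. (x,y)) has_derivative (\<lambda>h. (h, 0))) (at x within {a..b})"
      by (auto intro!: derivative_eq_intros)
    from has_derivative_compose[OF this df[OF inU[OF x y]]]
    show "((\<lambda>x. f (x,y)) has_vector_derivative fx (x,y)) (at x within {a..b})"
      by (simp add: has_vector_derivative_def)
  qed
  have hy: "((\<lambda>y. fy (x,y)) has_integral (f (x,d) - f (x,c))) {c..d}" if x: "x \<in> {a..b}" for x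
  proof (rule fundamental_theorem_of_calculus[OF Q(3)])
    fix y assume y: "y \<in> {c..d}"
    have "((\<lambda>y. (x,y)) has_derivative (\<lambda>h. (0, h))) (at y within {c..d})"
      by (auto intro!: derivative_eq_intros)
    from has_derivative_compose[OF this df[OF inU[OF x y]]]
    show "((\<lambda>y. f (x,y)) has_vector_derivative fy (x,y)) (at y within {c..d})"
      by (simp add: has_vector_derivative_def)
  qed
  have cQxy: "continuous_on (cbox (a,c) (b,d)) fxy" by (rule continuous_on_subset[OF cxy Q(1)])
  have cQyx: "continuous_on (cbox (a,c) (b,d)) fyx" by (rule continuous_on_subset[OF cyx Q(1)])
  have "integral (cbox (a,c) (b,d)) fxy = integral {a..b} (\<lambda>x. integral {c..d} (\<lambda>y. fxy (x,y)))"
    using integral_prod_continuous[OF cQxy] by simp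
  also have "\<dots> = integral {a..b} (\<lambda>x. fx (x,d) - fx (x,c))"
  proof (rule integral_cong)
    fix x assume x: "x \<in> {a..b}"
    have "((\<lambda>y. fxy (x,y)) has_integral (fx (x,d) - fx (x,c))) {c..d}"
    proof (rule fundamental_theorem_of_calculus[OF Q(3)])
      fix y assume y: "y \<in> {c..d}"
      show "((\<lambda>y. fx (x,y)) has_vector_derivative fxy (x,y)) (at y within {c..d})"
        using dfx[OF inU[OF x y]] by (simp add: has_vector_derivative_at_within)
    qed
    then show "integral {c..d} (\<lambda>y. fxy (x,y)) = fx (x,d) - fx (x,c)" by (rule integral_unique)
  qed
  also have "\<dots> = (f (b,d) - f (a,d)) - (f (b,c) - f (a,c))"
    using has_integral_diff[OF hx[of d] hx[of c]] Q(3) by (simp add: integral_unique)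
  finally have e1: "integral (cbox (a,c) (b,d)) fxy = (f (b,d) - f (a,d)) - (f (b,c) - f (a,c))" .
  have "integral (cbox (a,c) (b,d)) fyx = integral (cbox (c,a) (d,b)) (\<lambda>(y,x). fyx (x,y))"
    using integral_swap_2dim[of a c b d "\<lambda>x y. fyx (x,y)"] cQyx by simp
  also have "\<dots> = integral {c..d} (\<lambda>y. integral {a..b} (\<lambda>x. fyx (x,y)))"
  proof -
    have c1: "continuous_on (cbox (c,a) (d,b)) (\<lambda>x::real\<times>real. (snd x, fst x))"
      by (intro continuous_intros)
    have s1: "(\<lambda>x::real\<times>real. (snd x, fst x)) ` cbox (c,a) (d,b) \<subseteq> cbox (a,c) (b,d)"
      by (auto simp: cbox_Pair_eq)
    have "continuous_on (cbox (c,a) (d,b)) (\<lambda>(y,x). fyx (x,y))"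
      using continuous_on_compose2[OF cQyx c1 s1] by (simp add: case_prod_unfold)
    from integral_prod_continuous[OF this] show ?thesis by simp
  qed
  also have "\<dots> = integral {c..d} (\<lambda>y. fy (b,y) - fy (a,y))"
  proof (rule integral_cong)
    fix y assume y: "y \<in> {c..d}"
    have "((\<lambda>x. fyx (x,y)) has_integral (fy (b,y) - fy (a,y))) {a..b}"
    proof (rule fundamental_theorem_of_calculus[OF Q(2)])
      fix x assume x: "x \<in> {a..b}"
      show "((\<lambda>x. fy (x,y)) has_vector_derivative fyx (x,y)) (at x within {a..b})"
        using dfy[OF inU[OF x y]] by (simp add: has_vector_derivative_at_within)
    qed
    then show "integral {a..b} (\<lambda>x. fyx (x,y)) = fy (b,y) - fy (a,y)" by (rule integral_unique)
  qed
  also have "\<dots> = (f (b,d) - f (b,c)) - (f (a,d) - f (a,c))"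
    using has_integral_diff[OF hy[of b] hy[of a]] Q(2) by (simp add: integral_unique)
  finally have e2: "integral (cbox (a,c) (b,d)) fyx = (f (b,d) - f (b,c)) - (f (a,d) - f (a,c))" .
  have "(f (b,d) - f (a,d)) - (f (b,c) - f (a,c)) = (f (b,d) - f (b,c)) - (f (a,d) - f (a,c))"
    by (simp add: algebra_simps)
  then show ?thesis using e1 e2 by simp
qed

lemma clairaut:
  fixes f fx fy fxy fyx :: "real \<times> real \<Rightarrow> complex"
  assumes U: "open U" and p: "p \<in> U"
    and df: "\<And>z. z \<in> U \<Longrightarrow> (f has_derivative (\<lambda>v. fst v *\<^sub>R fx z + snd v *\<^sub>R fy z)) (at z)"
    and dfx: "\<And>z. z \<in> U \<Longrightarrow> ((\<lambda>t. fx (fst z, t)) has_vector_derivative fxy z) (at (snd z))"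
    and dfy: "\<And>z. z \<in> U \<Longrightarrow> ((\<lambda>t. fy (t, snd z)) has_vector_derivative fyx z) (at (fst z))"
    and cxy: "continuous_on U fxy" and cyx: "continuous_on U fyx"
  shows "fxy p = fyx p"
proof (rule ccontr)
  assume ne: "fxy p \<noteq> fyx p"
  define h where "h = (\<lambda>z. fxy z - fyx z)"
  define e where "e = norm (h p) / 2"
  have e: "e > 0" using ne by (simp add: e_def h_def)
  have ch: "continuous_on U h" unfolding h_def by (intro continuous_intros cxy cyx)
  then have "continuous (at p) h" using U p by (simp add: continuous_on_eq_continuous_at)
  then obtain d1 where d1: "d1 > 0" "\<And>z. dist z p < d1 \<Longrightarrow> dist (h z) (h p) < e"
    using e unfolding continuous_at_eps_delta by blast
  obtain d2 where d2: "d2 > 0" "ball p d2 \<subseteq> U" using U p open_contains_ball by blast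
  define d where "d = min d1 d2 / 2"
  have d: "d > 0" using d1 d2 by (simp add: d_def)
  obtain p1 p2 where pp: "p = (p1,p2)" by (cases p)
  define Q where "Q = cbox (p1 - d/2, p2 - d/2) (p1 + d/2, p2 + d/2)"
  have Qball: "dist z p < min d1 d2" if "z \<in> Q" for z
  proof -
    obtain z1 z2 where z: "z = (z1,z2)" by (cases z)
    have "\<bar>z1 - p1\<bar> \<le> d/2" "\<bar>z2 - p2\<bar> \<le> d/2" using that by (auto simp: Q_def z cbox_Pair_eq abs_if)
    then have "(z1 - p1)\<^sup>2 \<le> (d/2)\<^sup>2" "(z2 - p2)\<^sup>2 \<le> (d/2)\<^sup>2"
      by (metis power2_abs power_mono abs_ge_zero)+
    then have "dist z p \<le> sqrt ((d/2)\<^sup>2 + (d/2)\<^sup>2)"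
      by (auto simp: z pp dist_Pair_Pair dist_real_def intro!: real_sqrt_le_mono)
    also have "\<dots> \<le> sqrt (d * d)" by (rule real_sqrt_le_mono) (use d in \<open>simp add: power2_eq_square\<close>)
    also have "\<dots> < 2 * d" using d by simp
    finally show ?thesis by (simp add: d_def)
  qed
  have QU: "Q \<subseteq> U" using Qball d2 by (force simp: dist_commute)
  have "integral Q fxy = integral Q fyx"
    unfolding Q_def by (rule rect_zero[OF U df dfx dfy cxy cyx]) (use QU d in \<open>auto simp: Q_def\<close>)
  moreover have "fxy integrable_on Q" "fyx integrable_on Q"
    unfolding Q_def by (rule integrable_continuous, rule continuous_on_subset[OF _ QU[unfolded Q_def]], fact)+
  ultimately have i0: "integral Q h = 0" by (simp add: h_def integral_diff)
  have cQ: "measure lborel Q = d * d" using d by (simp add: Q_def content_Pair)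
  have hint: "((\<lambda>z. h z - h p) has_integral (integral Q h - measure lborel Q *\<^sub>R h p)) Q"
    by (rule has_integral_diff) (use \<open>fxy integrable_on Q\<close> \<open>fyx integrable_on Q\<close> in
        \<open>auto simp: h_def Q_def intro: integrable_integral integrable_diff\<close>)
  have hb: "norm (h z - h p) \<le> e" if "z \<in> Q" for z
    using d1(2)[of z] Qball[OF that] by (simp add: dist_norm)
  have "norm (integral Q h - measure lborel Q *\<^sub>R h p) \<le> e * measure lborel Q"
    unfolding Q_def by (rule has_integral_bound[OF _ hint[unfolded Q_def]]) (use e hb in \<open>auto simp: Q_def\<close>)
  then have "d * d * norm (h p) \<le> e * (d * d)" using i0 cQ d by simp
  then have "norm (h p) \<le> e" using d by simp
  then show False using e by (simp add: e_def)
qed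


lemma fd_works: "f differentiable (at p) \<Longrightarrow> (f has_derivative frechet_derivative f (at p)) (at p)"
  by (simp add: frechet_derivative_works)

lemma pt3_decomp: "(v::pt3) = fst v *\<^sub>R evec3 0 + fst (snd v) *\<^sub>R evec3 1 + snd (snd v) *\<^sub>R evec3 2"
  by (cases v) (simp add: evec3_def)

lemma lin3:
  fixes f :: "pt3 \<Rightarrow> 'b::real_normed_vector"
  assumes "f differentiable (at p)"
  shows "(f has_derivative (\<lambda>v. fst v *\<^sub>R pd3 0 f p + fst (snd v) *\<^sub>R pd3 1 f p + snd (snd v) *\<^sub>R pd3 2 f p)) (at p)"
proof -
  have d: "(f has_derivative frechet_derivative f (at p)) (at p)" using fd_works[OF assms] .
  then have l: "linear (frechet_derivative f (at p))" by (rule has_derivative_linear)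
  have "frechet_derivative f (at p) v = fst v *\<^sub>R pd3 0 f p + fst (snd v) *\<^sub>R pd3 1 f p + snd (snd v) *\<^sub>R pd3 2 f p" for v
    by (subst pt3_decomp[of v]) (simp add: linear_add[OF l] linear_cmul[OF l] pd3_def)
  then have "frechet_derivative f (at p) = (\<lambda>v. fst v *\<^sub>R pd3 0 f p + fst (snd v) *\<^sub>R pd3 1 f p + snd (snd v) *\<^sub>R pd3 2 f p)"
    by (rule ext)
  then show ?thesis using d by simp
qed

lemma pd3_eq:
  assumes "(f has_derivative f') (at p)"
  shows "pd3 a f p = f' (evec3 a)"
  using frechet_derivative_at[OF assms] by (simp add: pd3_def)

lemma pd2_eq:
  assumes "(f has_derivative f') (at p)"
  shows "pd2 a f p = f' (evec2 a)"
  using frechet_derivative_at[OF assms] by (simp add: pd2_def)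

lemma slice_has_derivative:
  assumes "f differentiable (at (s,y))"
  shows "((\<lambda>y. f (s,y)) has_derivative (\<lambda>v. frechet_derivative f (at (s,y)) (0,v))) (at y)"
proof -
  have "((\<lambda>y. (s,y)) has_derivative (\<lambda>v. (0,v))) (at y)"
    by (auto intro!: derivative_eq_intros)
  from has_derivative_compose[OF this fd_works[OF assms]] show ?thesis .
qed

lemma slice_pd:
  assumes "f differentiable (at (s,y))" "a \<in> {1,2}"
  shows "pd2 a (\<lambda>y. f (s,y)) y = pd3 a f (s,y)"
proof -
  have e: "(0::real, evec2 a) = evec3 a" using assms(2) by (auto simp: evec2_def evec3_def)
  show ?thesis using pd2_eq[OF slice_has_derivative[OF assms(1)], of a] unfolding pd3_def e .
qed

lemma pd2_local:
  assumes "open W" "y \<in> W" "\<And>z. z \<in> W \<Longrightarrow> f z = g z" "(g has_derivative g') (at y)"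
  shows "pd2 a f y = g' (evec2 a)"
proof -
  have "(f has_derivative g') (at y)"
    by (rule has_derivative_transform_within_open[OF assms(4) assms(1) assms(2)]) (use assms(3) in auto)
  then show ?thesis by (rule pd2_eq)
qed


definition Qf :: "config3 \<Rightarrow> nat \<Rightarrow> pt3 \<Rightarrow> real" where
  "Qf U a p = rinner (\<i> * fst U p) (cov3 U a p) + snd U a p"

lemma rinner_inner: "rinner x y = inner x y" by (simp add: rinner_def inner_complex_def)

lemma Qf_deriv:
  fixes \<phi> :: "pt3 \<Rightarrow> complex" and A :: "nat \<Rightarrow> pt3 \<Rightarrow> real"
  assumes d\<phi>: "\<phi> differentiable (at p)" and d\<phi>a: "pd3 a \<phi> differentiable (at p)" and dA: "A a differentiable (at p)"
  shows "(Qf (\<phi>,A) a has_derivative (\<lambda>v. rinner (\<i> * frechet_derivative \<phi> (at p) v) (cov3 (\<phi>,A) a p)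
     + rinner (\<i> * \<phi> p) (frechet_derivative (pd3 a \<phi>) (at p) v
          - \<i> * complex_of_real (frechet_derivative (A a) (at p) v) * \<phi> p
          - \<i> * complex_of_real (A a p) * frechet_derivative \<phi> (at p) v)
     + frechet_derivative (A a) (at p) v)) (at p)"
proof -
  note D1 = fd_works[OF d\<phi>] and D2 = fd_works[OF d\<phi>a] and D3 = fd_works[OF dA]
  have "Qf (\<phi>,A) a = (\<lambda>p. inner (\<i> * \<phi> p) (pd3 a \<phi> p - \<i> * complex_of_real (A a p) * \<phi> p) + A a p)"
    by (simp add: fun_eq_iff Qf_def cov3_def rinner_inner)
  moreover have "((\<lambda>p. inner (\<i> * \<phi> p) (pd3 a \<phi> p - \<i> * complex_of_real (A a p) * \<phi> p) + A a p) has_derivative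
     (\<lambda>v. rinner (\<i> * frechet_derivative \<phi> (at p) v) (cov3 (\<phi>,A) a p)
     + rinner (\<i> * \<phi> p) (frechet_derivative (pd3 a \<phi>) (at p) v
          - \<i> * complex_of_real (frechet_derivative (A a) (at p) v) * \<phi> p
          - \<i> * complex_of_real (A a p) * frechet_derivative \<phi> (at p) v)
     + frechet_derivative (A a) (at p) v)) (at p)"
    by (rule derivative_eq_intros D1 D2 D3 refl | simp)+
       (simp add: fun_eq_iff rinner_inner cov3_def algebra_simps inner_diff_right inner_add_right)
  ultimately show ?thesis by simp
qed

lemma pd3_Qf:
  fixes \<phi> :: "pt3 \<Rightarrow> complex" and A :: "nat \<Rightarrow> pt3 \<Rightarrow> real"
  assumes "\<phi> differentiable (at p)" "pd3 a \<phi> differentiable (at p)" "A a differentiable (at p)"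
  shows "pd3 b (Qf (\<phi>,A) a) p = rinner (\<i> * pd3 b \<phi> p) (cov3 (\<phi>,A) a p)
     + rinner (\<i> * \<phi> p) (pd3 b (pd3 a \<phi>) p - \<i> * complex_of_real (pd3 b (A a) p) * \<phi> p
          - \<i> * complex_of_real (A a p) * pd3 b \<phi> p) + pd3 b (A a) p"
  using pd3_eq[OF Qf_deriv[of \<phi> p a A, OF assms], of b] by (simp add: pd3_def)

lemma fd_lin:
  assumes "f differentiable (at q)"
  shows "frechet_derivative f (at q) (x *\<^sub>R u + y *\<^sub>R w) = x *\<^sub>R frechet_derivative f (at q) u + y *\<^sub>R frechet_derivative f (at q) w"
proof -
  have l: "linear (frechet_derivative f (at q))" by (rule has_derivative_linear[OF fd_works[OF assms]])
  show ?thesis by (simp add: linear_add[OF l] linear_cmul[OF l])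
qed

lemma fd_scale:
  assumes "f differentiable (at q)"
  shows "frechet_derivative f (at q) (x *\<^sub>R u) = x *\<^sub>R frechet_derivative f (at q) u"
  using fd_lin[OF assms, of x u 0 u] by simp

lemma pd3_sym:
  fixes \<phi> :: "pt3 \<Rightarrow> complex"
  assumes S: "open S" and p: "p \<in> S"
    and d1: "\<And>q. q \<in> S \<Longrightarrow> \<phi> differentiable (at q)"
    and d2: "\<And>q c. q \<in> S \<Longrightarrow> pd3 c \<phi> differentiable (at q)"
    and c2: "\<And>c e. continuous_on S (pd3 e (pd3 c \<phi>))"
  shows "pd3 a (pd3 b \<phi>) p = pd3 b (pd3 a \<phi>) p"
proof -
  define \<gamma> where "\<gamma> = (\<lambda>z::real\<times>real. p + fst z *\<^sub>R evec3 b + snd z *\<^sub>R evec3 a)"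
  define U where "U = \<gamma> -` S"
  have c\<gamma>: "continuous_on UNIV \<gamma>" unfolding \<gamma>_def by (intro continuous_intros)
  have U: "open U" unfolding U_def using c\<gamma> S
    by (intro continuous_open_vimage) (auto simp: continuous_on_eq_continuous_at)
  have \<gamma>0: "\<gamma> (0,0) = p" by (simp add: \<gamma>_def)
  have U0: "(0,0) \<in> U" using p \<gamma>0 by (simp add: U_def)
  have d\<gamma>: "(\<gamma> has_derivative (\<lambda>v. fst v *\<^sub>R evec3 b + snd v *\<^sub>R evec3 a)) (at z)" for z
    unfolding \<gamma>_def by (auto intro!: derivative_eq_intros)
  have \<gamma>U: "z \<in> U \<Longrightarrow> \<gamma> z \<in> S" for z by (simp add: U_def)
  have "pd3 a (pd3 b \<phi>) (\<gamma> (0,0)) = pd3 b (pd3 a \<phi>) (\<gamma> (0,0))"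
  proof (rule clairaut[OF U U0, where f="\<lambda>z. \<phi> (\<gamma> z)" and fx="\<lambda>z. pd3 b \<phi> (\<gamma> z)" and fy="\<lambda>z. pd3 a \<phi> (\<gamma> z)"])
    fix z assume z: "z \<in> U"
    show "((\<lambda>z. \<phi> (\<gamma> z)) has_derivative (\<lambda>v. fst v *\<^sub>R pd3 b \<phi> (\<gamma> z) + snd v *\<^sub>R pd3 a \<phi> (\<gamma> z))) (at z)"
      using has_derivative_compose[OF d\<gamma> fd_works[OF d1[OF \<gamma>U[OF z]]]]
      by (simp add: fd_lin[OF d1[OF \<gamma>U[OF z]]] pd3_def)
    have dt: "((\<lambda>t. \<gamma> (fst z, t)) has_derivative (\<lambda>h. h *\<^sub>R evec3 a)) (at (snd z))"
      unfolding \<gamma>_def by (auto intro!: derivative_eq_intros)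
    have z': "\<gamma> (fst z, snd z) \<in> S" using \<gamma>U[OF z] by simp
    have "((\<lambda>t. pd3 b \<phi> (\<gamma> (fst z, t))) has_derivative (\<lambda>h. h *\<^sub>R pd3 a (pd3 b \<phi>) (\<gamma> (fst z, snd z)))) (at (snd z))"
      using has_derivative_compose[OF dt fd_works[OF d2[of _ b, OF z']]]
      by (simp add: fd_scale[OF d2[of _ b, OF \<gamma>U[OF z]]] pd3_def[of a "pd3 b \<phi>"])
    then show "((\<lambda>t. pd3 b \<phi> (\<gamma> (fst z, t))) has_vector_derivative pd3 a (pd3 b \<phi>) (\<gamma> z)) (at (snd z))"
      by (simp add: has_vector_derivative_def)
    have ds: "((\<lambda>t. \<gamma> (t, snd z)) has_derivative (\<lambda>h. h *\<^sub>R evec3 b)) (at (fst z))"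
      unfolding \<gamma>_def by (auto intro!: derivative_eq_intros)
    have "((\<lambda>t. pd3 a \<phi> (\<gamma> (t, snd z))) has_derivative (\<lambda>h. h *\<^sub>R pd3 b (pd3 a \<phi>) (\<gamma> (fst z, snd z)))) (at (fst z))"
      using has_derivative_compose[OF ds fd_works[OF d2[of _ a, OF z']]]
      by (simp add: fd_scale[OF d2[of _ a, OF \<gamma>U[OF z]]] pd3_def[of b "pd3 a \<phi>"])
    then show "((\<lambda>t. pd3 a \<phi> (\<gamma> (t, snd z))) has_vector_derivative pd3 b (pd3 a \<phi>) (\<gamma> z)) (at (fst z))"
      by (simp add: has_vector_derivative_def)
  next
    show "continuous_on U (\<lambda>z. pd3 a (pd3 b \<phi>) (\<gamma> z))"
      by (rule continuous_on_compose2[OF c2 continuous_on_subset[OF c\<gamma>]]) (auto simp: U_def)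
    show "continuous_on U (\<lambda>z. pd3 b (pd3 a \<phi>) (\<gamma> z))"
      by (rule continuous_on_compose2[OF c2 continuous_on_subset[OF c\<gamma>]]) (auto simp: U_def)
  qed
  then show ?thesis using \<gamma>0 by simp
qed


lemma omega_identity:
  fixes \<phi> :: "pt3 \<Rightarrow> complex" and A :: "nat \<Rightarrow> pt3 \<Rightarrow> real"
  assumes d1: "\<phi> differentiable (at p)" and d2: "\<And>c. pd3 c \<phi> differentiable (at p)"
    and dA0: "A 0 differentiable (at p)" and dAa: "A a differentiable (at p)"
    and sym: "pd3 a (pd3 0 \<phi>) p = pd3 0 (pd3 a \<phi>) p"
  shows "(pd3 0 (Qf (\<phi>,A) a) p - pd3 a (Qf (\<phi>,A) 0) p) / 2 =
     rinner (\<i> * cov3 (\<phi>,A) 0 p) (cov3 (\<phi>,A) a p) + curv3 (\<phi>,A) 0 a p * (1 - (cmod (\<phi> p))\<^sup>2) / 2"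
  unfolding pd3_Qf[of \<phi> p a A, OF d1 d2 dAa] pd3_Qf[of \<phi> p 0 A, OF d1 d2 dA0] sym cmod_power2
  by (simp add: rinner_def cov3_def curv3_def power2_eq_square field_simps)

lemma rinner_bound: "\<bar>rinner x y\<bar> \<le> cmod x * cmod y"
  unfolding rinner_def by (metis abs_Re_le_cmod complex_mod_cnj norm_mult)

lemma cs_bound:
  fixes a b c s :: real
  assumes "c\<^sup>2 + s\<^sup>2 = 1"
  shows "(- s * a + c * b)\<^sup>2 \<le> a\<^sup>2 + b\<^sup>2"
proof -
  have "(a\<^sup>2 + b\<^sup>2) - (- s * a + c * b)\<^sup>2 = (a\<^sup>2 + b\<^sup>2) * (c\<^sup>2 + s\<^sup>2) - (- s * a + c * b)\<^sup>2"
    using assms by simp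
  also have "\<dots> = (c * a + s * b)\<^sup>2" by (simp add: power2_eq_square algebra_simps)
  finally show ?thesis by (smt (verit) zero_le_power2)
qed

lemma energy_bound:
  fixes D0 D1 D2 :: complex and F01 F02 F12 m c s eps lam :: real
  assumes cs: "c\<^sup>2 + s\<^sup>2 = 1" and eps: "eps > 0" and lam: "lam > 0"
  shows "\<bar>- s * (rinner (\<i> * D0) D1 + F01 * (1 - m) / 2) + c * (rinner (\<i> * D0) D2 + F02 * (1 - m) / 2)\<bar>
     \<le> max 1 (1/lam) * ((1/2) * ((cmod D0)\<^sup>2 + (cmod D1)\<^sup>2 + (cmod D2)\<^sup>2)
          + eps\<^sup>2/2 * (F01\<^sup>2 + F02\<^sup>2 + F12\<^sup>2) + lam / (8 * eps\<^sup>2) * (m - 1)\<^sup>2)"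
proof -
  define Dt where "Dt = - complex_of_real s * D1 + complex_of_real c * D2"
  define Ft where "Ft = - s * F01 + c * F02"
  have split: "- s * (rinner (\<i> * D0) D1 + F01 * (1 - m) / 2) + c * (rinner (\<i> * D0) D2 + F02 * (1 - m) / 2)
      = rinner (\<i> * D0) Dt + Ft * (1 - m) / 2"
    by (simp add: Dt_def Ft_def rinner_def algebra_simps) (simp add: field_simps)
  have "cmod Dt \<le> \<bar>s\<bar> * cmod D1 + \<bar>c\<bar> * cmod D2"
    unfolding Dt_def by (rule order_trans[OF norm_triangle_ineq]) (simp add: norm_mult)
  then have "(cmod Dt)\<^sup>2 \<le> (\<bar>s\<bar> * cmod D1 + \<bar>c\<bar> * cmod D2)\<^sup>2"
    by (simp add: power_mono)
  also have "\<dots> = (- (-\<bar>s\<bar>) * cmod D1 + \<bar>c\<bar> * cmod D2)\<^sup>2" by simp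
  also have "\<dots> \<le> (cmod D1)\<^sup>2 + (cmod D2)\<^sup>2"
    by (rule cs_bound) (use cs in simp)
  finally have Dt2: "(cmod Dt)\<^sup>2 \<le> (cmod D1)\<^sup>2 + (cmod D2)\<^sup>2" .
  have Ft2: "Ft\<^sup>2 \<le> F01\<^sup>2 + F02\<^sup>2" unfolding Ft_def by (rule cs_bound[OF cs])
  have X: "\<bar>rinner (\<i> * D0) Dt\<bar> \<le> (1/2) * ((cmod D0)\<^sup>2 + (cmod Dt)\<^sup>2)"
  proof -
    have "\<bar>rinner (\<i> * D0) Dt\<bar> \<le> cmod D0 * cmod Dt"
      using rinner_bound[of "\<i> * D0" Dt] by (simp add: norm_mult)
    also have "\<dots> \<le> (1/2) * ((cmod D0)\<^sup>2 + (cmod Dt)\<^sup>2)"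
      using sum_squares_bound[of "cmod D0" "cmod Dt"] by simp
    finally show ?thesis .
  qed
  have Y: "\<bar>Ft * (1 - m) / 2\<bar> \<le> eps\<^sup>2/2 * Ft\<^sup>2 + (m - 1)\<^sup>2 / (8 * eps\<^sup>2)"
  proof -
    have "0 \<le> (eps * \<bar>Ft\<bar> - \<bar>1 - m\<bar> / (2 * eps))\<^sup>2" by simp
    also have "\<dots> = eps\<^sup>2 * Ft\<^sup>2 - \<bar>Ft\<bar> * \<bar>1 - m\<bar> + (1 - m)\<^sup>2 / (4 * eps\<^sup>2)"
      using eps by (simp add: power2_eq_square field_simps)
    finally have "\<bar>Ft\<bar> * \<bar>1 - m\<bar> \<le> eps\<^sup>2 * Ft\<^sup>2 + (1 - m)\<^sup>2 / (4 * eps\<^sup>2)" by simp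
    then have "\<bar>Ft\<bar> * \<bar>1 - m\<bar> \<le> eps\<^sup>2 * Ft\<^sup>2 + (m - 1)\<^sup>2 / (4 * eps\<^sup>2)" by (simp add: power2_commute)
    moreover have "\<bar>Ft * (1 - m) / 2\<bar> = (\<bar>Ft\<bar> * \<bar>1 - m\<bar>) / 2" by (simp add: abs_mult)
    moreover have "eps\<^sup>2/2 * Ft\<^sup>2 + (m - 1)\<^sup>2 / (8 * eps\<^sup>2) = (eps\<^sup>2 * Ft\<^sup>2 + (m - 1)\<^sup>2 / (4 * eps\<^sup>2)) / 2"
      using eps by (simp add: field_simps)
    ultimately show ?thesis by linarith
  qed
  have lhs: "\<bar>rinner (\<i> * D0) Dt + Ft * (1 - m) / 2\<bar> \<le>
      (1/2) * ((cmod D0)\<^sup>2 + (cmod D1)\<^sup>2 + (cmod D2)\<^sup>2) + eps\<^sup>2/2 * (F01\<^sup>2 + F02\<^sup>2 + F12\<^sup>2) + (m - 1)\<^sup>2 / (8 * eps\<^sup>2)"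
  proof -
    have "eps\<^sup>2/2 * Ft\<^sup>2 \<le> eps\<^sup>2/2 * (F01\<^sup>2 + F02\<^sup>2 + F12\<^sup>2)"
      using Ft2 by (intro mult_left_mono) (auto intro: order_trans[OF _ add_increasing2[OF zero_le_power2 order_refl]])
    then show ?thesis using X Y Dt2 abs_triangle_ineq[of "rinner (\<i> * D0) Dt" "Ft * (1 - m) / 2"]
      by (simp only: distrib_left add_divide_distrib; linarith)
  qed
  define P where "P = (1/2) * ((cmod D0)\<^sup>2 + (cmod D1)\<^sup>2 + (cmod D2)\<^sup>2) + eps\<^sup>2/2 * (F01\<^sup>2 + F02\<^sup>2 + F12\<^sup>2)"
  define C where "C = lam / (8 * eps\<^sup>2) * (m - 1)\<^sup>2"
  have P0: "P \<ge> 0" by (simp add: P_def)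
  have C0: "C \<ge> 0" using lam by (simp add: C_def)
  have CC: "(m - 1)\<^sup>2 / (8 * eps\<^sup>2) = (1/lam) * C" using lam by (simp add: C_def)
  have "P + (1/lam) * C \<le> max 1 (1/lam) * P + max 1 (1/lam) * C"
    using mult_right_mono[OF max.cobounded1[of 1 "1/lam"] P0] mult_right_mono[OF max.cobounded2[of "1/lam" 1] C0]
    by simp
  then have "P + (1/lam) * C \<le> max 1 (1/lam) * (P + C)" by (simp add: algebra_simps)
  then show ?thesis using lhs unfolding split CC P_def C_def by linarith
qed


lemma Qf_differentiable:
  fixes \<phi> :: "pt3 \<Rightarrow> complex" and A :: "nat \<Rightarrow> pt3 \<Rightarrow> real"
  assumes "\<phi> differentiable (at p)" "pd3 a \<phi> differentiable (at p)" "A a differentiable (at p)"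
  shows "Qf (\<phi>,A) a differentiable (at p)"
  using Qf_deriv[of \<phi> p a A, OF assms] by (rule differentiableI)

lemma vort_slice:
  fixes \<phi> :: "pt3 \<Rightarrow> complex" and A :: "nat \<Rightarrow> pt3 \<Rightarrow> real"
  assumes S: "open S" and sy: "(s,y) \<in> S"
    and d1: "\<And>q. q \<in> S \<Longrightarrow> \<phi> differentiable (at q)"
    and d2: "\<And>q c. q \<in> S \<Longrightarrow> pd3 c \<phi> differentiable (at q)"
    and dA: "\<And>q c. q \<in> S \<Longrightarrow> c \<in> {0,1,2} \<Longrightarrow> A c differentiable (at q)"
  shows "vort (slice (\<phi>,A) s) y = (pd3 1 (Qf (\<phi>,A) 2) (s,y) - pd3 2 (Qf (\<phi>,A) 1) (s,y)) / 2"
proof -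
  define W where "W = (\<lambda>z. (s,z)) -` S"
  have W: "open W" unfolding W_def using S
    by (intro continuous_open_vimage) (auto intro!: continuous_intros)
  have yW: "y \<in> W" using sy by (simp add: W_def)
  let ?V = "slice (\<phi>,A) s"
  have jc: "jcur ?V a z = Qf (\<phi>,A) a (s,z) - A a (s,z)" if "z \<in> W" "a \<in> {1,2}" for a z
  proof -
    have zS: "(s,z) \<in> S" using that by (simp add: W_def)
    have "cov2 ?V a z = cov3 (\<phi>,A) a (s,z)"
      using slice_pd[OF d1[OF zS] that(2)] by (simp add: cov2_def cov3_def slice_def)
    then show ?thesis by (simp add: jcur_def Qf_def slice_def)
  qed
  have pj: "pd2 b (jcur ?V a) y = pd3 b (Qf (\<phi>,A) a) (s,y) - pd3 b (A a) (s,y)" if a: "a \<in> {1,2}" and b: "b \<in> {1,2}" for a b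
  proof -
    have dQ: "Qf (\<phi>,A) a differentiable (at (s,y))"
      by (rule Qf_differentiable) (use d1 d2 dA sy a in auto)
    have dAa: "A a differentiable (at (s,y))" using dA sy a by auto
    have h: "((\<lambda>p. Qf (\<phi>,A) a p - A a p) has_derivative
       (\<lambda>v. frechet_derivative (Qf (\<phi>,A) a) (at (s,y)) v - frechet_derivative (A a) (at (s,y)) v)) (at (s,y))"
      by (intro has_derivative_diff fd_works dQ dAa)
    have "((\<lambda>y. (s,y)) has_derivative (\<lambda>v. (0,v))) (at y)"
      by (auto intro!: derivative_eq_intros)
    from has_derivative_compose[OF this h]
    have hs: "((\<lambda>z. Qf (\<phi>,A) a (s,z) - A a (s,z)) has_derivative
       (\<lambda>v. frechet_derivative (Qf (\<phi>,A) a) (at (s,y)) (0,v) - frechet_derivative (A a) (at (s,y)) (0,v))) (at y)" .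
    have e: "(0::real, evec2 b) = evec3 b" using b by (auto simp: evec2_def evec3_def)
    show ?thesis
      using pd2_local[OF W yW _ hs, of "jcur ?V a" b] jc[OF _ a] unfolding e pd3_def by simp
  qed
  have pA: "pd2 b (snd ?V a) y = pd3 b (A a) (s,y)" if a: "a \<in> {1,2}" and b: "b \<in> {1,2}" for a b
    using slice_pd[OF _ b, of "A a" s y] dA sy a by (auto simp: slice_def)
  show ?thesis
    using pj[of 2 1] pj[of 1 2] pA[of 2 1] pA[of 1 2] by (simp add: vort_def curv2_def)
qed


lemma chain3:
  fixes f :: "pt3 \<Rightarrow> real"
  assumes "(f has_derivative (\<lambda>v. fst v *\<^sub>R fa + fst (snd v) *\<^sub>R fb + snd (snd v) *\<^sub>R fc)) (at (ga t, gb t, gc t))"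
    and "(ga has_real_derivative da) (at t within X)" "(gb has_real_derivative db) (at t within X)"
    "(gc has_real_derivative dc) (at t within X)"
  shows "((\<lambda>t. f (ga t, gb t, gc t)) has_real_derivative (da * fa + db * fb + dc * fc)) (at t within X)"
proof -
  have G: "((\<lambda>t. (ga t, gb t, gc t)) has_derivative (\<lambda>h. (da * h, db * h, dc * h))) (at t within X)"
    using assms(2,3,4) by (intro has_derivative_Pair) (auto simp: has_field_derivative_def)
  show ?thesis unfolding has_field_derivative_def
    by (rule has_derivative_eq_rhs[OF has_derivative_compose[OF G assms(1)]]) (simp add: fun_eq_iff algebra_simps)
qed

lemma integral_cmul_real: "integral S (\<lambda>x. (c::real) * f x) = c * integral S f"
  using integral_cmul[of S c f] by simp

lemma diff_at:
  assumes "open S" "f differentiable_on S" "q \<in> S"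
  shows "f differentiable (at q)"
  using assms differentiable_on_eq_differentiable_at by blast

lemma pd3_eta: "pd3 c f = (\<lambda>p. frechet_derivative f (at p) (evec3 c))"
  by (simp add: fun_eq_iff pd3_def)

lemma e3d_explicit: "e3d eps lam U p = (1/2) * ((cmod (cov3 U 0 p))\<^sup>2 + (cmod (cov3 U 1 p))\<^sup>2 + (cmod (cov3 U 2 p))\<^sup>2)
   + eps\<^sup>2/2 * ((curv3 U 0 1 p)\<^sup>2 + (curv3 U 0 2 p)\<^sup>2 + (curv3 U 1 2 p)\<^sup>2)
   + lam / (8 * eps\<^sup>2) * ((cmod (fst U p))\<^sup>2 - 1)\<^sup>2"
  by (simp add: e3d_def add.assoc)

theorem lemma3p3:
  fixes T R \<epsilon> lam r t :: real and \<phi> :: "pt3 \<Rightarrow> complex" and A :: "nat \<Rightarrow> pt3 \<Rightarrow> real"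
  assumes "T > 0" "R > 0" "\<epsilon> > 0" "lam > 0"
    and "open S" "{0..T} \<times> cball (0::pt2) R \<subseteq> S"
    and "smooth_on S \<phi>" "\<And>a. a \<in> {0,1,2} \<Longrightarrow> smooth_on S (A a)"
    and "r \<in> {0<..<R}" "t \<in> {0<..<T}"
  shows "\<bar>integral (ball 0 r) (vort (slice (\<phi>, A) t)) - integral (ball 0 r) (vort (slice (\<phi>, A) 0))\<bar>
         \<le> max 1 (1/lam) * cyl_integral t r (e3d \<epsilon> lam (\<phi>, A))"
proof -
  note T = assms(1) and R = assms(2) and eps = assms(3) and lam = assms(4) and S = assms(5)
    and SS = assms(6) and sm\<phi> = assms(7) and smA = assms(8) and r = assms(9) and t = assms(10)
  have r0: "0 < r" and rR: "r < R" using r by auto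
  have t0: "0 < t" and tT: "t < T" using t by auto
  have C2: "Ck_on 2 S \<phi>" using sm\<phi> by (simp add: smooth_on_def)
  have C2': "\<phi> differentiable_on S \<and> (\<forall>v. (\<lambda>x. frechet_derivative \<phi> (at x) v) differentiable_on S \<and>
     (\<forall>w. continuous_on S (\<lambda>x. frechet_derivative (\<lambda>x. frechet_derivative \<phi> (at x) v) (at x) w)))"
    using C2[unfolded numeral_2_eq_2 Ck_on.simps] .
  have d1: "\<phi> differentiable (at q)" if "q \<in> S" for q
    using C2' that S by (auto intro: diff_at)
  have d2: "pd3 c \<phi> differentiable (at q)" if "q \<in> S" for q c
    unfolding pd3_eta using C2' that S by (blast intro: diff_at)
  have c2: "continuous_on S (pd3 e (pd3 c \<phi>))" for c e
    unfolding pd3_eta using C2' by blast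
  have C1A: "Ck_on 1 S (A a)" if "a \<in> {0,1,2}" for a using smA[OF that] by (simp add: smooth_on_def)
  have C1A': "A a differentiable_on S \<and> (\<forall>v. continuous_on S (\<lambda>x. frechet_derivative (A a) (at x) v))"
    if "a \<in> {0,1,2}" for a
    using C1A[OF that, unfolded One_nat_def Ck_on.simps] .
  have dA: "A c differentiable (at q)" if "q \<in> S" "c \<in> {0,1,2}" for q c
    using C1A'[OF that(2)] that(1) S by (blast intro: diff_at)
  have cA1: "continuous_on S (pd3 b (A a))" if "a \<in> {0,1,2}" for a b
    unfolding pd3_eta using C1A'[OF that] by blast
  have c\<phi>: "continuous_on S \<phi>"
    by (rule continuous_at_imp_continuous_on) (use d1 differentiable_imp_continuous_within in blast)
  have c\<phi>1: "continuous_on S (pd3 c \<phi>)" for c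
    by (rule continuous_at_imp_continuous_on) (use d2 differentiable_imp_continuous_within in blast)
  have cA: "continuous_on S (A a)" if "a \<in> {0,1,2}" for a
    by (rule continuous_at_imp_continuous_on) (use dA that differentiable_imp_continuous_within in blast)
  have ccov: "continuous_on S (cov3 (\<phi>,A) a)" if "a \<in> {0,1,2}" for a
    unfolding cov3_def fst_conv snd_conv
    by (intro continuous_intros c\<phi>1 c\<phi> cA that)
  have dQ: "Qf (\<phi>,A) a differentiable (at q)" if "q \<in> S" "a \<in> {0,1,2}" for q a
    by (rule Qf_differentiable) (use d1 d2 dA that in auto)
  have cQ: "continuous_on S (Qf (\<phi>,A) a)" if "a \<in> {0,1,2}" for a
    by (rule continuous_at_imp_continuous_on) (use dQ that differentiable_imp_continuous_within in blast)
  have cdQ: "continuous_on S (pd3 b (Qf (\<phi>,A) a))" if a: "a \<in> {0,1,2}" for a b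
  proof -
    have "continuous_on S (\<lambda>p. rinner (\<i> * pd3 b \<phi> p) (cov3 (\<phi>,A) a p)
     + rinner (\<i> * \<phi> p) (pd3 b (pd3 a \<phi>) p - \<i> * complex_of_real (pd3 b (A a) p) * \<phi> p
          - \<i> * complex_of_real (A a p) * pd3 b \<phi> p) + pd3 b (A a) p)"
      unfolding rinner_inner
      by (intro continuous_intros c\<phi>1 c\<phi> cA a c2 cA1 ccov)
    then show ?thesis
    proof (rule continuous_on_cong[THEN iffD1, OF refl, rotated])
      fix q assume q: "q \<in> S"
      show "rinner (\<i> * pd3 b \<phi> q) (cov3 (\<phi>,A) a q)
     + rinner (\<i> * \<phi> q) (pd3 b (pd3 a \<phi>) q - \<i> * complex_of_real (pd3 b (A a) q) * \<phi> q
          - \<i> * complex_of_real (A a q) * pd3 b \<phi> q) + pd3 b (A a) q = pd3 b (Qf (\<phi>,A) a) q"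
        using pd3_Qf[of \<phi> q a A, OF d1[OF q] d2[OF q] dA[OF q a]] by simp
    qed
  qed
  have lQ: "(Qf (\<phi>,A) a has_derivative (\<lambda>v. fst v *\<^sub>R pd3 0 (Qf (\<phi>,A) a) q + fst (snd v) *\<^sub>R pd3 1 (Qf (\<phi>,A) a) q
       + snd (snd v) *\<^sub>R pd3 2 (Qf (\<phi>,A) a) q)) (at q)" if "q \<in> S" "a \<in> {0,1,2}" for q a
    by (rule lin3[OF dQ[OF that]])
  define Q where "Q = Qf (\<phi>,A)"
  define cyl where "cyl = (\<lambda>s \<theta>. (s, r * cos \<theta>, r * sin \<theta>) :: pt3)"
  define B where "B = cbox (0::real,0::real) (t, 2*pi)"
  have cylS: "cyl s \<theta> \<in> S" if "s \<in> {0..t}" for s \<theta>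
  proof -
    have "norm (r * cos \<theta>, r * sin \<theta>) = r" using norm_Pol[of "(r,\<theta>)"] r0 by (simp add: Pol_def)
    then have "(r * cos \<theta>, r * sin \<theta>) \<in> cball 0 R" using rR by simp
    moreover have "s \<in> {0..T}" using that tT by auto
    ultimately show ?thesis using SS by (auto simp: cyl_def)
  qed
  have cylB: "cyl (fst p) (snd p) \<in> S" if "p \<in> B" for p
    using that cylS by (auto simp: B_def cbox_Pair_eq)
  have ccyl: "continuous_on B (\<lambda>p. g (cyl (fst p) (snd p)))" if "continuous_on S g" for g
  proof -
    have "continuous_on B (\<lambda>p. cyl (fst p) (snd p))" unfolding cyl_def by (intro continuous_intros)
    from continuous_on_compose2[OF that this] cylB show ?thesis by blast
  qed
  have green: "integral (ball 0 r) (vort (slice (\<phi>,A) s)) =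
      (1/2) * integral {0..2*pi} (\<lambda>\<theta>. (- sin \<theta> * Q 1 (cyl s \<theta>) + cos \<theta> * Q 2 (cyl s \<theta>)) * r)"
    if s: "s \<in> {0..t}" for s
  proof -
    define W where "W = (\<lambda>y. (s,y)) -` S"
    have W: "open W" unfolding W_def using S
      by (intro continuous_open_vimage) (auto intro!: continuous_intros)
    have cbW: "cball 0 r \<subseteq> W"
    proof
      fix y :: pt2 assume "y \<in> cball 0 r"
      then have "y \<in> cball 0 R" using rR by auto
      moreover have "s \<in> {0..T}" using s tT by auto
      ultimately show "y \<in> W" using SS by (auto simp: W_def)
    qed
    have dP: "((\<lambda>y. Q a (s,y)) has_derivative (\<lambda>v. fst v * pd3 1 (Q a) (s,y) + snd v * pd3 2 (Q a) (s,y))) (at y)"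
      if y: "y \<in> W" and a: "a \<in> {0,1,2}" for y a
    proof -
      have "((\<lambda>y. (s,y)) has_derivative (\<lambda>v. (0,v))) (at y)" by (auto intro!: derivative_eq_intros)
      from has_derivative_compose[OF this lQ[of "(s,y)" a]] y a
      show ?thesis by (simp add: W_def Q_def)
    qed
    have cP: "continuous_on W (\<lambda>y. pd3 b (Q a) (s,y))" if a: "a \<in> {0,1,2}" for a b
    proof -
      have "continuous_on W (\<lambda>y. (s,y))" by (intro continuous_intros)
      from continuous_on_compose2[OF cdQ[OF a, of b] this] show ?thesis by (auto simp: W_def Q_def)
    qed
    have G: "integral (ball 0 r) (\<lambda>y. pd3 1 (Q 2) (s,y) - pd3 2 (Q 1) (s,y)) =
        integral {0..2*pi} (\<lambda>\<theta>. (- sin \<theta> * Q 1 (s, r * cos \<theta>, r * sin \<theta>) + cos \<theta> * Q 2 (s, r * cos \<theta>, r * sin \<theta>)) * r)"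
      using green_disk[OF W cbW r0, of "\<lambda>y. Q 1 (s,y)" "\<lambda>y. pd3 1 (Q 1) (s,y)" "\<lambda>y. pd3 2 (Q 1) (s,y)"
         "\<lambda>y. Q 2 (s,y)" "\<lambda>y. pd3 1 (Q 2) (s,y)" "\<lambda>y. pd3 2 (Q 2) (s,y)"]
      using dP cP by simp
    have "integral (ball 0 r) (vort (slice (\<phi>,A) s)) = integral (ball 0 r) (\<lambda>y. (1/2) * (pd3 1 (Q 2) (s,y) - pd3 2 (Q 1) (s,y)))"
    proof (rule integral_cong)
      fix y :: pt2 assume "y \<in> ball 0 r"
      then have "y \<in> W" using cbW by auto
      then have "(s,y) \<in> S" by (simp add: W_def)
      from vort_slice[OF S this d1 d2 dA] show "vort (slice (\<phi>,A) s) y = (1/2) * (pd3 1 (Q 2) (s,y) - pd3 2 (Q 1) (s,y))"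
        by (simp add: Q_def)
    qed
    also have "\<dots> = (1/2) * integral (ball 0 r) (\<lambda>y. pd3 1 (Q 2) (s,y) - pd3 2 (Q 1) (s,y))"
      by (rule integral_cmul_real)
    finally show ?thesis unfolding G by (simp add: cyl_def)
  qed
  define Xc where "Xc = (\<lambda>s \<theta>. (- sin \<theta> * Q 1 (cyl s \<theta>) + cos \<theta> * Q 2 (cyl s \<theta>)) * r)"
  define Xs where "Xs = (\<lambda>p. (- sin (snd p) * pd3 0 (Q 1) (cyl (fst p) (snd p)) + cos (snd p) * pd3 0 (Q 2) (cyl (fst p) (snd p))) * r)"
  define Yt where "Yt = (\<lambda>p. r * (- sin (snd p) * pd3 1 (Q 0) (cyl (fst p) (snd p)) + cos (snd p) * pd3 2 (Q 0) (cyl (fst p) (snd p))))"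
  have cXs: "continuous_on B Xs" unfolding Xs_def
    by (intro continuous_intros ccyl cdQ[folded Q_def]) auto
  have cYt: "continuous_on B Yt" unfolding Yt_def
    by (intro continuous_intros ccyl cdQ[folded Q_def]) auto
  have cXc: "continuous_on {0..2*pi} (Xc s)" if s: "s \<in> {0..t}" for s
  proof -
    have c: "continuous_on {0..2*pi} (\<lambda>\<theta>. cyl s \<theta>)" unfolding cyl_def by (intro continuous_intros)
    have i: "(\<lambda>\<theta>. cyl s \<theta>) ` {0..2*pi} \<subseteq> S" using cylS[OF s] by auto
    show ?thesis unfolding Xc_def
      by (intro continuous_intros continuous_on_compose2[OF cQ[folded Q_def] _ i] c) auto
  qed
  have HQ: "integral (ball 0 r) (vort (slice (\<phi>,A) s)) = (1/2) * integral {0..2*pi} (Xc s)" if "s \<in> {0..t}" for s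
    using green[OF that] by (simp add: Xc_def)
  have ftc: "integral {0..t} (\<lambda>s. Xs (s,\<theta>)) = Xc t \<theta> - Xc 0 \<theta>" for \<theta>
  proof -
    have "((\<lambda>s. Xs (s,\<theta>)) has_integral (Xc t \<theta> - Xc 0 \<theta>)) {0..t}"
    proof (rule fundamental_theorem_of_calculus)
      show "0 \<le> t" using t0 by simp
      fix s assume s: "s \<in> {0..t}"
      have dq: "((\<lambda>s. Q a (s, r * cos \<theta>, r * sin \<theta>)) has_real_derivative (1 * pd3 0 (Q a) (cyl s \<theta>) + 0 * pd3 1 (Q a) (cyl s \<theta>) + 0 * pd3 2 (Q a) (cyl s \<theta>))) (at s within {0..t})"
        if a: "a \<in> {0,1,2}" for a
        by (rule chain3[where ga="\<lambda>s. s" and gb="\<lambda>s. r * cos \<theta>" and gc="\<lambda>s. r * sin \<theta>"])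
           (use lQ[OF cylS[OF s] a] in \<open>auto simp: Q_def cyl_def intro!: derivative_eq_intros\<close>)
      show "((\<lambda>s. Xc s \<theta>) has_vector_derivative Xs (s,\<theta>)) (at s within {0..t})"
        unfolding has_real_derivative_iff_has_vector_derivative[symmetric] Xc_def Xs_def cyl_def
        by (rule derivative_eq_intros dq[of 1, unfolded cyl_def] dq[of 2, unfolded cyl_def] refl | simp)+
    qed
    then show ?thesis by (rule integral_unique)
  qed
  have intXs: "integral B Xs = integral {0..2*pi} (Xc t) - integral {0..2*pi} (Xc 0)"
  proof -
    have "integral B Xs = integral (cbox (0,0) (2*pi,t)) (\<lambda>(x,y). Xs (y,x))"
      unfolding B_def using integral_swap_2dim[of 0 0 t "2*pi" "\<lambda>x y. Xs (x,y)"] cXs[unfolded B_def] by simp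
    also have "\<dots> = integral {0..2*pi} (\<lambda>\<theta>. integral {0..t} (\<lambda>s. Xs (s,\<theta>)))"
    proof -
      have c1: "continuous_on (cbox (0,0) (2*pi,t)) (\<lambda>x::real\<times>real. (snd x, fst x))"
        by (intro continuous_intros)
      have s1: "(\<lambda>x::real\<times>real. (snd x, fst x)) ` cbox (0,0) (2*pi,t) \<subseteq> cbox (0,0) (t,2*pi)"
        by (auto simp: cbox_Pair_eq)
      have "continuous_on (cbox (0,0) (2*pi,t)) (\<lambda>(x,y). Xs (y,x))"
        using continuous_on_compose2[OF cXs[unfolded B_def] c1 s1] by (simp add: case_prod_unfold)
      from integral_prod_continuous[OF this] show ?thesis by simp
    qed
    also have "\<dots> = integral {0..2*pi} (\<lambda>\<theta>. Xc t \<theta> - Xc 0 \<theta>)" by (simp add: ftc)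
    also have "\<dots> = integral {0..2*pi} (Xc t) - integral {0..2*pi} (Xc 0)"
      by (rule integral_diff) (use cXc t0 in \<open>auto intro!: integrable_continuous_real\<close>)
    finally show ?thesis .
  qed
  have intYt: "integral B Yt = 0"
  proof -
    have "integral B Yt = integral {0..t} (\<lambda>s. integral {0..2*pi} (\<lambda>\<theta>. Yt (s,\<theta>)))"
      unfolding B_def using integral_prod_continuous[OF cYt[unfolded B_def]] by simp
    also have "\<dots> = integral {0..t} (\<lambda>s. 0)"
    proof (rule integral_cong)
      fix s assume s: "s \<in> {0..t}"
      have "((\<lambda>\<theta>. Yt (s,\<theta>)) has_integral (Q 0 (cyl s (2*pi)) - Q 0 (cyl s 0))) {0..2*pi}"
      proof (rule fundamental_theorem_of_calculus)
        fix \<theta> assume \<theta>: "\<theta> \<in> {0..2*pi}"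
        have "((\<lambda>\<theta>. Q 0 (s, r * cos \<theta>, r * sin \<theta>)) has_real_derivative (0 * pd3 0 (Q 0) (cyl s \<theta>) + (- r * sin \<theta>) * pd3 1 (Q 0) (cyl s \<theta>) + (r * cos \<theta>) * pd3 2 (Q 0) (cyl s \<theta>))) (at \<theta> within {0..2*pi})"
          by (rule chain3[where ga="\<lambda>\<theta>. s" and gb="\<lambda>\<theta>. r * cos \<theta>" and gc="\<lambda>\<theta>. r * sin \<theta>"])
             (use lQ[OF cylS[OF s], of 0] in \<open>auto simp: Q_def cyl_def intro!: derivative_eq_intros\<close>)
        then show "((\<lambda>\<theta>. Q 0 (cyl s \<theta>)) has_vector_derivative Yt (s,\<theta>)) (at \<theta> within {0..2*pi})"
          unfolding has_real_derivative_iff_has_vector_derivative[symmetric] Yt_def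
          by (simp add: cyl_def algebra_simps)
      qed simp
      then show "integral {0..2*pi} (\<lambda>\<theta>. Yt (s,\<theta>)) = 0"
        by (simp add: integral_unique cyl_def)
    qed
    finally show ?thesis by simp
  qed
  have diff: "integral (ball 0 r) (vort (slice (\<phi>, A) t)) - integral (ball 0 r) (vort (slice (\<phi>, A) 0))
      = integral B (\<lambda>p. (Xs p - Yt p) / 2)"
  proof -
    have "integral B (\<lambda>p. (Xs p - Yt p) / 2) = (integral B Xs - integral B Yt) / 2"
      using integral_diff[of Xs B Yt] integral_cmul_real[of B "1/2" "\<lambda>p. Xs p - Yt p"] cXs cYt
      by (simp add: B_def integrable_continuous)
    then show ?thesis using HQ[of t] HQ[of 0] t0 intXs intYt by simp
  qed
  define E where "E = e3d \<epsilon> lam (\<phi>,A)"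
  define M where "M = max 1 (1/lam)"
  have bnd: "\<bar>(Xs p - Yt p) / 2\<bar> \<le> M * (E (cyl (fst p) (snd p)) * r)" if p: "p \<in> B" for p
  proof -
    define q where "q = cyl (fst p) (snd p)"
    define \<theta> where "\<theta> = snd p"
    have q: "q \<in> S" using cylB[OF p] by (simp add: q_def)
    have sym: "pd3 a (pd3 0 \<phi>) q = pd3 0 (pd3 a \<phi>) q" for a by (rule pd3_sym[OF S q d1 d2 c2])
    have dA0: "A 0 differentiable (at q)" and dA1: "A 1 differentiable (at q)" and dA2: "A 2 differentiable (at q)"
      using dA[OF q] by auto
    have O1: "(pd3 0 (Q 1) q - pd3 1 (Q 0) q) / 2 = rinner (\<i> * cov3 (\<phi>,A) 0 q) (cov3 (\<phi>,A) 1 q) + curv3 (\<phi>,A) 0 1 q * (1 - (cmod (\<phi> q))\<^sup>2) / 2"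
      unfolding Q_def by (rule omega_identity[OF d1[OF q] d2[OF q] dA0 dA1 sym])
    have O2: "(pd3 0 (Q 2) q - pd3 2 (Q 0) q) / 2 = rinner (\<i> * cov3 (\<phi>,A) 0 q) (cov3 (\<phi>,A) 2 q) + curv3 (\<phi>,A) 0 2 q * (1 - (cmod (\<phi> q))\<^sup>2) / 2"
      unfolding Q_def by (rule omega_identity[OF d1[OF q] d2[OF q] dA0 dA2 sym])
    have "(Xs p - Yt p) / 2 = r * (- sin \<theta> * ((pd3 0 (Q 1) q - pd3 1 (Q 0) q) / 2) + cos \<theta> * ((pd3 0 (Q 2) q - pd3 2 (Q 0) q) / 2))"
      by (simp add: Xs_def Yt_def q_def \<theta>_def field_simps)
    also have "\<dots> = r * (- sin \<theta> * (rinner (\<i> * cov3 (\<phi>,A) 0 q) (cov3 (\<phi>,A) 1 q) + curv3 (\<phi>,A) 0 1 q * (1 - (cmod (\<phi> q))\<^sup>2) / 2)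
        + cos \<theta> * (rinner (\<i> * cov3 (\<phi>,A) 0 q) (cov3 (\<phi>,A) 2 q) + curv3 (\<phi>,A) 0 2 q * (1 - (cmod (\<phi> q))\<^sup>2) / 2))"
      unfolding O1 O2 ..
    finally have eqX: "(Xs p - Yt p) / 2 = \<dots>" .
    have EB: "\<bar>- sin \<theta> * (rinner (\<i> * cov3 (\<phi>,A) 0 q) (cov3 (\<phi>,A) 1 q) + curv3 (\<phi>,A) 0 1 q * (1 - (cmod (\<phi> q))\<^sup>2) / 2)
        + cos \<theta> * (rinner (\<i> * cov3 (\<phi>,A) 0 q) (cov3 (\<phi>,A) 2 q) + curv3 (\<phi>,A) 0 2 q * (1 - (cmod (\<phi> q))\<^sup>2) / 2)\<bar>
        \<le> max 1 (1/lam) * ((1/2) * ((cmod (cov3 (\<phi>,A) 0 q))\<^sup>2 + (cmod (cov3 (\<phi>,A) 1 q))\<^sup>2 + (cmod (cov3 (\<phi>,A) 2 q))\<^sup>2)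
          + \<epsilon>\<^sup>2/2 * ((curv3 (\<phi>,A) 0 1 q)\<^sup>2 + (curv3 (\<phi>,A) 0 2 q)\<^sup>2 + (curv3 (\<phi>,A) 1 2 q)\<^sup>2)
          + lam / (8 * \<epsilon>\<^sup>2) * ((cmod (\<phi> q))\<^sup>2 - 1)\<^sup>2)"
      by (rule energy_bound) (use eps lam in auto)
    have Eq: "E q = (1/2) * ((cmod (cov3 (\<phi>,A) 0 q))\<^sup>2 + (cmod (cov3 (\<phi>,A) 1 q))\<^sup>2 + (cmod (cov3 (\<phi>,A) 2 q))\<^sup>2)
          + \<epsilon>\<^sup>2/2 * ((curv3 (\<phi>,A) 0 1 q)\<^sup>2 + (curv3 (\<phi>,A) 0 2 q)\<^sup>2 + (curv3 (\<phi>,A) 1 2 q)\<^sup>2)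
          + lam / (8 * \<epsilon>\<^sup>2) * ((cmod (\<phi> q))\<^sup>2 - 1)\<^sup>2"
      unfolding E_def e3d_explicit by simp
    have "\<bar>(Xs p - Yt p) / 2\<bar> = r * \<bar>- sin \<theta> * (rinner (\<i> * cov3 (\<phi>,A) 0 q) (cov3 (\<phi>,A) 1 q) + curv3 (\<phi>,A) 0 1 q * (1 - (cmod (\<phi> q))\<^sup>2) / 2)
        + cos \<theta> * (rinner (\<i> * cov3 (\<phi>,A) 0 q) (cov3 (\<phi>,A) 2 q) + curv3 (\<phi>,A) 0 2 q * (1 - (cmod (\<phi> q))\<^sup>2) / 2)\<bar>"
      unfolding eqX using r0 by (simp add: abs_mult)
    also have "\<dots> \<le> r * (M * E q)"
      using EB r0 unfolding Eq M_def by (intro mult_left_mono) auto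
    finally show ?thesis by (simp add: q_def algebra_simps)
  qed
  have cE: "continuous_on S E"
  proof -
    have "E = (\<lambda>q. (1/2) * ((cmod (cov3 (\<phi>,A) 0 q))\<^sup>2 + (cmod (cov3 (\<phi>,A) 1 q))\<^sup>2 + (cmod (cov3 (\<phi>,A) 2 q))\<^sup>2)
          + \<epsilon>\<^sup>2/2 * ((curv3 (\<phi>,A) 0 1 q)\<^sup>2 + (curv3 (\<phi>,A) 0 2 q)\<^sup>2 + (curv3 (\<phi>,A) 1 2 q)\<^sup>2)
          + lam / (8 * \<epsilon>\<^sup>2) * ((cmod (\<phi> q))\<^sup>2 - 1)\<^sup>2)"
      unfolding E_def e3d_explicit by (simp add: fun_eq_iff)
    then show ?thesis unfolding curv3_def snd_conv
      by (simp only:) (intro continuous_intros ccov cA1 c\<phi>; simp)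
  qed
  have intg: "(\<lambda>p. (Xs p - Yt p) / 2) integrable_on B"
    unfolding B_def by (intro integrable_continuous continuous_intros cXs[unfolded B_def] cYt[unfolded B_def]) auto
  have intE: "(\<lambda>p. M * (E (cyl (fst p) (snd p)) * r)) integrable_on B"
    unfolding B_def by (intro integrable_continuous continuous_intros ccyl[OF cE, unfolded B_def])
  have "\<bar>integral B (\<lambda>p. (Xs p - Yt p) / 2)\<bar> \<le> integral B (\<lambda>p. M * (E (cyl (fst p) (snd p)) * r))"
    using integral_norm_bound_integral[OF intg intE] bnd by (simp add: real_norm_def)
  also have "\<dots> = M * integral B (\<lambda>p. E (cyl (fst p) (snd p)) * r)"
    by (rule integral_cmul_real)
  also have "integral B (\<lambda>p. E (cyl (fst p) (snd p)) * r) = cyl_integral t r E"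
  proof -
    have bx: "{0<..<t} \<times> {0<..<2*pi} = box (0::real,0::real) (t,2*pi)" by (simp add: box_Pair_eq)
    have "cyl_integral t r E = integral (box (0::real,0::real) (t,2*pi)) (\<lambda>p. E (cyl (fst p) (snd p)) * r)"
      unfolding cyl_integral_def bx by (simp add: cyl_def case_prod_unfold)
    then show ?thesis unfolding B_def integral_open_interval by simp
  qed
  finally show ?thesis unfolding diff M_def E_def .
qed


end
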